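(* If a share $I$ has exactly $m$ bridges and no arches, then in $\mathcal S$ we have $I=x^m+\sum_{k<m}a_k(c)x^k$ and $I=y^m+\sum_{k<m}b_k(c)y^k$ for some $a_k,b_k\in\mathbb C[c]$; i.e. $I$ is a monic polynomial of degree $m$ in $x$ (and in $y$).
   Context: Chord diagrams and $w_{\mathfrak{sl}_2}(D)=\sum_\varphi x_{\varphi(p_1)}\cdots x_{\varphi(p_{2n})}\in\mathbb C[c]$ ($x_1,x_2,x_3$ the basis $\tfrac12\begin{pmatrix}0&1\\1&0\end{pmatrix},\tfrac12\begin{pmatrix}0&-i\\ i&0\end{pmatrix},\tfrac12\begin{pmatrix}1&0\\0&-1\end{pmatrix}$ of $\mathfrak{sl}_2$, $c=\sum x_i^2$, endpoints read in order from a cut point, $\varphi$ over maps chords$\to\{1,2,3\}$). A share: two oriented intervals (strand 1, strand 2) with finitely many chords, up to orientation-preserving diffeomorphisms of each strand; arches have both endpoints on one strand, bridges one on each. Join $(I,H)$: chord diagram whose circle reads strand 1 of $I$, strand 1 of $H$, strand 2 of $I$, strand 2 of $H$. $\mathcal S$: quotient of the $\mathbb C$-span of shares by $I\sim I'$ iff $w_{\mathfrak{sl}_2}((I,H))=w_{\mathfrak{sl}_2}((I',H))$ for all shares $H$; a $\mathbb C[c]$-module with $c$ acting by adding an isolated arch. $x^k$ is the class of the share with $k$ bridges occurring in the same order on both strands; $y^k$ is the class of the share with $k$ bridges $b_1,\dots,b_k$ in order $b_1,\dots,b_k$ on strand 1 and $b_k,\dots,b_1$ on strand 2. *)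

theory Defs
  imports "HOL-Library.FuncSet" "HOL-Computational_Algebra.Polynomial"
begin

text \<open>
Shares: a share is given combinatorially by the two words read along strand 1 and
strand 2 (chords are labels; each label occurs exactly twice in total).
Representatives differing by relabelling represent the same share; all notions below
are invariant under relabelling.\<close>

type_synonym share = "nat list \<times> nat list"

definition is_share :: "share \<Rightarrow> bool" where
  "is_share s = (\<forall>l \<in> set (fst s @ snd s). count_list (fst s @ snd s) l = 2)"

definition arches :: "share \<Rightarrow> nat" where
  "arches s = card {l \<in> set (fst s) \<union> set (snd s).
      count_list (fst s) l = 2 \<or> count_list (snd s) l = 2}"

definition bridges :: "share \<Rightarrow> nat" where
  "bridges s = card {l \<in> set (fst s) \<union> set (snd s).
      count_list (fst s) l = 1 \<and> count_list (snd s) l = 1}"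

text \<open>x^k: k parallel bridges; y^k: k bridges in reversed order on strand 2.\<close>
definition xpow :: "nat \<Rightarrow> share" where
  "xpow k = ([0..<k], [0..<k])"

definition ypow :: "nat \<Rightarrow> share" where
  "ypow k = ([0..<k], rev [0..<k])"

text \<open>Join (I,H): circle reads strand 1 of I, strand 1 of H, strand 2 of I, strand 2 of H
(read linearly from the cut point before strand 1 of I); chords of I and H are kept
apart by tagging.\<close>
definition join :: "share \<Rightarrow> share \<Rightarrow> (nat + nat) list" where
  "join I H = map Inl (fst I) @ map Inr (fst H) @ map Inl (snd I) @ map Inr (snd H)"

definition add_arches :: "nat \<Rightarrow> share \<Rightarrow> share" where
  "add_arches j s = (let N = Suc (Max (insert 0 (set (fst s @ snd s))))
     in (fst s @ concat (map (\<lambda>t. [N + t, N + t]) [0..<j]), snd s))"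

text \<open>The irreducible (n+1)-dimensional representation V_n of sl_2, basis v_0..v_n with
h v_j = (n-2j) v_j, f v_j = v_(j+1), e v_j = j(n-j+1) v_(j-1). Matrices are functions
on indices 0..n (entry (i,j) = coefficient of v_i in the image of v_j).
For n = 1 the matrices of x_1,x_2,x_3 are exactly the given 2x2 matrices.\<close>
definition e_mat :: "nat \<Rightarrow> nat \<Rightarrow> nat \<Rightarrow> complex" where
  "e_mat n i j = (if i \<le> n \<and> j \<le> n \<and> j = Suc i then of_nat (j * (n + 1 - j)) else 0)"

definition f_mat :: "nat \<Rightarrow> nat \<Rightarrow> nat \<Rightarrow> complex" where
  "f_mat n i j = (if i \<le> n \<and> j \<le> n \<and> i = Suc j then 1 else 0)"

definition h_mat :: "nat \<Rightarrow> nat \<Rightarrow> nat \<Rightarrow> complex" where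
  "h_mat n i j = (if i \<le> n \<and> i = j then of_int (int n - 2 * int j) else 0)"

text \<open>rho n a = matrix of x_(a+1) in V_n, a in {0,1,2}.\<close>
definition rho :: "nat \<Rightarrow> nat \<Rightarrow> nat \<Rightarrow> nat \<Rightarrow> complex" where
  "rho n a i j = (if a = 0 then (e_mat n i j + f_mat n i j) / 2
                  else if a = 1 then \<i> * (f_mat n i j - e_mat n i j) / 2
                  else h_mat n i j / 2)"

fun matprod :: "nat \<Rightarrow> (nat \<Rightarrow> nat \<Rightarrow> complex) list \<Rightarrow> nat \<Rightarrow> nat \<Rightarrow> complex" where
  "matprod n [] i j = (if i = j then 1 else 0)"
| "matprod n (A # As) i j = (\<Sum>k\<le>n. A i k * matprod n As k j)"

text \<open>Image in V_n of w_sl2 of the chord diagram read (from the cut point) as the word ws: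
sum over maps phi: chords \<rightarrow> {1,2,3} of x_phi(p_1) ... x_phi(p_2n).\<close>
definition wrep :: "nat \<Rightarrow> 'a list \<Rightarrow> nat \<Rightarrow> nat \<Rightarrow> complex" where
  "wrep n ws i j = (\<Sum>\<phi> \<in> set ws \<rightarrow>\<^sub>E {0, 1, 2::nat}.
                       matprod n (map (\<lambda>l. rho n (\<phi> l)) ws) i j)"

text \<open>Formal C-linear combinations of shares, and equality in the module S:
L1 = L2 in S iff w_sl2((L1,H)) = w_sl2((L2,H)) for every share H.  Equality in
C[c] (a subalgebra of U(sl_2)) is tested in all irreducible representations V_n,
which together form a faithful family of representations of U(sl_2).\<close>
type_synonym comb = "(complex \<times> share) list"

definition comb_w :: "nat \<Rightarrow> comb \<Rightarrow> share \<Rightarrow> nat \<Rightarrow> nat \<Rightarrow> complex" where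
  "comb_w n L H i j = (\<Sum>(a, I) \<leftarrow> L. a * wrep n (join I H) i j)"

definition S_eq :: "comb \<Rightarrow> comb \<Rightarrow> bool" where
  "S_eq L1 L2 = (\<forall>H. is_share H \<longrightarrow>
      (\<forall>n i j. i \<le> n \<longrightarrow> j \<le> n \<longrightarrow> comb_w n L1 H i j = comb_w n L2 H i j))"

text \<open>C[c]-action: p(c) \<cdot> s = sum_j (coeff p j) c^j s, where c^j adds j isolated arches.\<close>
definition poly_act :: "complex poly \<Rightarrow> share \<Rightarrow> comb" where
  "poly_act p s = map (\<lambda>j. (coeff p j, add_arches j s)) [0..<Suc (degree p)]"

end

theory Submission
  imports Defs
begin

lemma sum_PiE_insert:
  assumes "x \<notin> D"
  shows "(\<Sum>\<phi> \<in> insert x D \<rightarrow>\<^sub>E S. F \<phi>) = (\<Sum>\<phi> \<in> D \<rightarrow>\<^sub>E S. \<Sum>y\<in>S. F (\<phi>(x := y)))"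
proof -
  have "(\<Sum>\<phi> \<in> insert x D \<rightarrow>\<^sub>E S. F \<phi>) = (\<Sum>\<phi> \<in> (\<lambda>(y, g). g(x := y)) ` (S \<times> (D \<rightarrow>\<^sub>E S)). F \<phi>)"
    by (simp add: PiE_insert_eq)
  also have "\<dots> = (\<Sum>yg \<in> S \<times> (D \<rightarrow>\<^sub>E S). F ((\<lambda>(y, g). g(x := y)) yg))"
    by (rule sum.reindex[unfolded comp_def], rule inj_combinator[OF assms])
  also have "\<dots> = (\<Sum>y\<in>S. \<Sum>g\<in>D \<rightarrow>\<^sub>E S. F (g(x:=y)))"
    by (simp add: sum.cartesian_product case_prod_beta)
  also have "\<dots> = (\<Sum>\<phi> \<in> D \<rightarrow>\<^sub>E S. \<Sum>y\<in>S. F (\<phi>(x := y)))"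
    by (rule sum.swap)
  finally show ?thesis .
qed

lemma sum_PiE_delta:
  assumes "finite D" "b \<in> D" "f \<in> D" "b \<noteq> f" "finite S"
  shows "(\<Sum>\<psi> \<in> D \<rightarrow>\<^sub>E S. if \<psi> b = \<psi> f then F \<psi> else 0)
       = (\<Sum>\<phi> \<in> (D - {b}) \<rightarrow>\<^sub>E S. F (\<phi>(b := \<phi> f)))"
proof -
  have D: "D = insert b (D - {b})" using assms by auto
  have "(\<Sum>\<psi> \<in> D \<rightarrow>\<^sub>E S. if \<psi> b = \<psi> f then F \<psi> else 0)
      = (\<Sum>\<phi> \<in> (D - {b}) \<rightarrow>\<^sub>E S. \<Sum>y\<in>S. if (\<phi>(b:=y)) b = (\<phi>(b:=y)) f then F (\<phi>(b:=y)) else 0)"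
    by (subst D, rule sum_PiE_insert) simp
  also have "\<dots> = (\<Sum>\<phi> \<in> (D - {b}) \<rightarrow>\<^sub>E S. F (\<phi>(b := \<phi> f)))"
  proof (rule sum.cong[OF refl])
    fix \<phi> assume "\<phi> \<in> (D - {b}) \<rightarrow>\<^sub>E S"
    then have "\<phi> f \<in> S" using assms by auto
    then show "(\<Sum>y\<in>S. if (\<phi>(b:=y)) b = (\<phi>(b:=y)) f then F (\<phi>(b:=y)) else 0) = F (\<phi>(b := \<phi> f))"
      using assms by (simp add: sum.delta)
  qed
  finally show ?thesis .
qed

definition eps :: "nat \<Rightarrow> nat \<Rightarrow> nat \<Rightarrow> complex" where
  "eps a b c = (if (a,b,c) \<in> {(0,1,2),(1,2,0),(2,0,1)} then 1
     else if (a,b,c) \<in> {(0,2,1),(2,1,0),(1,0,2)} then -1 else 0)"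

lemma less3: "(x::nat) < 3 \<Longrightarrow> x = 0 \<or> x = 1 \<or> x = 2" by auto

lemma sum3: "(\<Sum>x<3. F x) = F 0 + F 1 + F (2::nat)"
  by (simp add: numeral_3_eq_3 lessThan_Suc numeral_2_eq_2 add_ac)

lemma eps_swap12: "eps b a c = - eps a b c" by (auto simp: eps_def)
lemma eps_cyc: "eps b c a = eps a b c" by (auto simp: eps_def)

lemma eps_contract:
  assumes "b<3" "c<3" "f<3" "g<3"
  shows "(\<Sum>x<3. eps x b c * eps x f g) = (if b=f \<and> c=g then 1 else 0) - (if b=g \<and> c=f then 1 else 0)"
  using less3[OF assms(1)] less3[OF assms(2)] less3[OF assms(3)] less3[OF assms(4)]
  by (elim disjE) (simp_all add: sum3 eps_def)

definition lw :: "(nat \<Rightarrow> 'a::monoid_mult) \<Rightarrow> (nat \<Rightarrow> nat) \<Rightarrow> nat list \<Rightarrow> 'a" where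
  "lw g \<phi> w = prod_list (map (\<lambda>x. g (\<phi> x)) w)"

lemma lw_Nil[simp]: "lw g \<phi> [] = 1" by (simp add: lw_def)
lemma lw_Cons[simp]: "lw g \<phi> (x # w) = g (\<phi> x) * lw g \<phi> w" by (simp add: lw_def)
lemma lw_append[simp]: "lw g \<phi> (v @ w) = lw g \<phi> v * lw g \<phi> w" by (simp add: lw_def)
lemma lw_cong: "(\<And>x. x \<in> set w \<Longrightarrow> \<phi> x = \<psi> x) \<Longrightarrow> lw g \<phi> w = lw g \<psi> w"
  unfolding lw_def by (induction w) auto
lemma lw_map: "lw g \<phi> (map \<sigma> w) = lw g (\<phi> \<circ> \<sigma>) w"
  unfolding lw_def by (induction w) auto
lemma lw_upd: "x \<notin> set w \<Longrightarrow> lw g (\<phi>(x:=y)) w = lw g \<phi> w"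
  by (rule lw_cong) auto

definition Pv :: "(nat \<Rightarrow> 'a::ring_1) \<Rightarrow> (nat \<Rightarrow> 'a) \<Rightarrow> nat list \<Rightarrow> nat list \<Rightarrow> 'a" where
  "Pv l r p q = (\<Sum>\<phi> \<in> set (p @ q) \<rightarrow>\<^sub>E {..<3}. lw l \<phi> p * lw r \<phi> q)"

definition Tv :: "(complex \<Rightarrow> 'a::ring_1) \<Rightarrow> (nat \<Rightarrow> 'a) \<Rightarrow> (nat \<Rightarrow> 'a) \<Rightarrow> nat list \<Rightarrow> nat list
    \<Rightarrow> nat \<Rightarrow> nat \<Rightarrow> nat \<Rightarrow> 'a" where
  "Tv sc l r p q a b c = (\<Sum>\<phi> \<in> set (p @ q) \<rightarrow>\<^sub>E {..<3}. sc (eps (\<phi> a) (\<phi> b) (\<phi> c)) * (lw l \<phi> p * lw r \<phi> q))"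

definition Om :: "(nat \<Rightarrow> 'a::ring_1) \<Rightarrow> (nat \<Rightarrow> 'a) \<Rightarrow> 'a" where
  "Om l r = (\<Sum>a<3. l a * r a)"

inductive_set Spn :: "(complex \<Rightarrow> 'a::ring_1) \<Rightarrow> 'a \<Rightarrow> (nat \<Rightarrow> 'a) \<Rightarrow> nat \<Rightarrow> 'a set"
  for sc C G m where
  zero: "0 \<in> Spn sc C G m"
| add: "x \<in> Spn sc C G m \<Longrightarrow> y \<in> Spn sc C G m \<Longrightarrow> x + y \<in> Spn sc C G m"
| scal: "x \<in> Spn sc C G m \<Longrightarrow> sc z * x \<in> Spn sc C G m"
| cmul: "x \<in> Spn sc C G m \<Longrightarrow> C * x \<in> Spn sc C G m"
| gen: "j < m \<Longrightarrow> G j \<in> Spn sc C G m"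

lemma Spn_mono: "x \<in> Spn sc C G m \<Longrightarrow> m \<le> m' \<Longrightarrow> x \<in> Spn sc C G m'"
  by (induction rule: Spn.induct) (auto intro: Spn.intros)

lemma Spn_sum: "(\<And>i. i \<in> I \<Longrightarrow> f i \<in> Spn sc C G m) \<Longrightarrow> sum f I \<in> Spn sc C G m"
  by (induction I rule: infinite_finite_induct) (auto intro: Spn.intros)

locale sl2pair =
  fixes sc :: "complex \<Rightarrow> 'a::ring_1" and C :: 'a and l r :: "nat \<Rightarrow> 'a" and kl kr :: complex
  assumes sc_add: "sc (x + y) = sc x + sc y"
  and sc_mult: "sc (x * y) = sc x * sc y"
  and sc_one: "sc 1 = 1"
  and sc_comm: "sc z * (w::'a) = w * sc z"
  and lr_comm: "a < 3 \<Longrightarrow> b < 3 \<Longrightarrow> l a * r b = r b * l a"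
  and l_lie: "a < 3 \<Longrightarrow> b < 3 \<Longrightarrow> l a * l b = l b * l a + sc kl * (\<Sum>c<3. sc (eps a b c) * l c)"
  and r_lie: "a < 3 \<Longrightarrow> b < 3 \<Longrightarrow> r a * r b = r b * r a + sc kr * (\<Sum>c<3. sc (eps a b c) * r c)"
  and l_cas: "(\<Sum>a<3. l a * l a) = C"
  and r_cas: "(\<Sum>a<3. r a * r a) = C"
  and C_l: "a < 3 \<Longrightarrow> C * l a = l a * C"
  and C_r: "a < 3 \<Longrightarrow> C * r a = r a * C"

lemma sl2pair_swap:
  assumes "sl2pair sc C l r kl kr" shows "sl2pair sc C r l kr kl"
proof -
  interpret sl2pair sc C l r kl kr by (rule assms)
  show ?thesis
    apply unfold_locales
              apply (rule sc_add)
             apply (rule sc_mult)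
            apply (rule sc_one)
           apply (rule sc_comm)
          apply (simp add: lr_comm)
         apply (rule r_lie; assumption)
        apply (rule l_lie; assumption)
       apply (rule r_cas)
      apply (rule l_cas)
     apply (rule C_r; assumption)
    apply (rule C_l; assumption)
    done
qed

context sl2pair
begin

lemma sc_zero[simp]: "sc 0 = 0"
  using sc_add[of 0 0] by simp

lemma sc_one'[simp]: "sc 1 = 1" by (rule sc_one)

lemma sc_uminus: "sc (- x) = - sc x"
  using sc_add[of x "-x"] by (simp add: add_eq_0_iff)

lemma sc_diff: "sc (x - y) = sc x - sc y"
  using sc_add[of x "-y"] by (simp add: sc_uminus)

lemma sc_sum: "sc (sum f I) = (\<Sum>i\<in>I. sc (f i))"
  by (induction I rule: infinite_finite_induct) (auto simp: sc_add)

lemma sc_neg1: "sc (-1) = -1" by (simp add: sc_uminus)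

lemma sc_left_comm: "X * (sc z * Y) = sc z * (X * Y)"
  by (metis mult.assoc sc_comm)

lemma sc_mult_assoc: "sc z * (sc w * Y) = sc (z * w) * Y"
  by (simp add: sc_mult mult.assoc)

lemma lw_sc: "lw g \<phi> w * (sc z * Y) = sc z * (lw g \<phi> w * Y)"
  by (metis mult.assoc sc_comm)
lemma l_sc: "l a * (sc z * Y) = sc z * (l a * Y)"
  by (metis mult.assoc sc_comm)

lemma sandwich_sum: "X * (\<Sum>i\<in>I. sc (h i) * Y i) * Z = (\<Sum>i\<in>I. sc (h i) * (X * Y i * Z))"
  by (simp add: sum_distrib_left sum_distrib_right sc_left_comm mult.assoc)

lemma lw_r_comm: "(\<forall>x\<in>set w. \<phi> x < 3) \<Longrightarrow> b < 3 \<Longrightarrow> lw l \<phi> w * r b = r b * lw l \<phi> w"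
proof (induction w)
  case (Cons x w)
  then have "lw l \<phi> (x # w) * r b = l (\<phi> x) * (lw l \<phi> w * r b)" by (simp add: mult.assoc)
  also have "\<dots> = (l (\<phi> x) * r b) * lw l \<phi> w" using Cons by (simp add: mult.assoc)
  also have "\<dots> = r b * lw l \<phi> (x # w)" using Cons by (simp add: lr_comm mult.assoc)
  finally show ?case .
qed simp

lemma lw_lr_comm: "(\<forall>x\<in>set w. \<phi> x < 3) \<Longrightarrow> (\<forall>x\<in>set v. \<psi> x < 3) \<Longrightarrow>
   lw l \<phi> w * lw r \<psi> v = lw r \<psi> v * lw l \<phi> w"
proof (induction v)
  case (Cons x v)
  then have "lw l \<phi> w * lw r \<psi> (x # v) = (lw l \<phi> w * r (\<psi> x)) * lw r \<psi> v" by (simp add: mult.assoc)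
  also have "\<dots> = r (\<psi> x) * (lw l \<phi> w * lw r \<psi> v)" using Cons by (simp add: lw_r_comm mult.assoc)
  also have "\<dots> = lw r \<psi> (x # v) * lw l \<phi> w" using Cons by (simp add: mult.assoc)
  finally show ?case .
qed simp

lemma C_lw_l: "(\<forall>x\<in>set w. \<phi> x < 3) \<Longrightarrow> C * lw l \<phi> w = lw l \<phi> w * C"
proof (induction w)
  case (Cons x w)
  then show ?case by (simp add: C_l mult.assoc flip: mult.assoc[of C])
qed simp

lemma C_lw_r: "(\<forall>x\<in>set w. \<phi> x < 3) \<Longrightarrow> C * lw r \<phi> w = lw r \<phi> w * C"
proof (induction w)
  case (Cons x w)
  then show ?case by (simp add: C_r mult.assoc flip: mult.assoc[of C])
qed simp

lemma Om_C: "Om l r * C = C * Om l r"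
proof -
  have "Om l r * C = (\<Sum>a<3. l a * (r a * C))" by (simp add: Om_def sum_distrib_right mult.assoc)
  also have "\<dots> = (\<Sum>a<3. C * (l a * r a))"
    by (rule sum.cong[OF refl]) (metis C_l C_r mult.assoc lessThan_iff)
  finally show ?thesis by (simp add: Om_def sum_distrib_left)
qed

lemma Om_sc: "Om l r * sc z = sc z * Om l r" by (simp add: sc_comm)

lemma l_eps: assumes "c < 3"
  shows "(\<Sum>a<3. \<Sum>b<3. sc (eps a b c) * (l a * l b)) = sc kl * l c"
proof -
  have h12: "l (Suc 0) * l 2 = l 2 * l (Suc 0) + sc kl * l 0" using l_lie[of 1 2] by (simp add: sum3 eps_def)
  have h20: "l 2 * l 0 = l 0 * l 2 + sc kl * l (Suc 0)" using l_lie[of 2 0] by (simp add: sum3 eps_def)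
  have h01: "l 0 * l (Suc 0) = l (Suc 0) * l 0 + sc kl * l 2" using l_lie[of 0 1] by (simp add: sum3 eps_def)
  show ?thesis using less3[OF assms]
    by (elim disjE) (simp_all add: sum3 eps_def sc_neg1 h12 h20 h01)
qed

lemma PiE3: "\<phi> \<in> D \<rightarrow>\<^sub>E {..<3::nat} \<Longrightarrow> x \<in> D \<Longrightarrow> \<phi> x < 3" by auto

lemma swap1:
  assumes t: "t \<notin> set (A @ [u,v] @ B @ q)" and uv: "u \<in> set (A@B@q)" "v \<in> set (A@B@q)"
  shows "Pv l r (A@[u,v]@B) q = Pv l r (A@[v,u]@B) q + sc kl * Tv sc l r (A@[t]@B) q u v t"
proof -
  define D where "D = set (A@B@q)"
  have D1: "set ((A@[u,v]@B) @ q) = D" "set ((A@[v,u]@B) @ q) = D" "set((A@[t]@B)@q) = insert t D"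
    using uv by (auto simp: D_def)
  have tD: "t \<notin> D" "t \<noteq> u" "t \<noteq> v" "t \<notin> set A" "t \<notin> set B" "t \<notin> set q" using t by (auto simp: D_def)
  have uvD: "u \<in> D" "v \<in> D" using uv by (auto simp: D_def)
  have "Pv l r (A@[u,v]@B) q = (\<Sum>\<phi>\<in>D\<rightarrow>\<^sub>E{..<3}. lw l \<phi> A * (l (\<phi> u) * l (\<phi> v)) * lw l \<phi> B * lw r \<phi> q)"
    unfolding Pv_def D1 by (simp add: mult.assoc)
  also have "\<dots> = (\<Sum>\<phi>\<in>D\<rightarrow>\<^sub>E{..<3}. lw l \<phi> A * (l (\<phi> v) * l (\<phi> u)) * lw l \<phi> B * lw r \<phi> q)
     + (\<Sum>\<phi>\<in>D\<rightarrow>\<^sub>E{..<3}. lw l \<phi> A * (sc kl * (\<Sum>y<3. sc (eps (\<phi> u) (\<phi> v) y) * l y)) * lw l \<phi> B * lw r \<phi> q)"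
    unfolding sum.distrib[symmetric]
  proof (rule sum.cong[OF refl])
    fix \<phi> :: "nat \<Rightarrow> nat" assume "\<phi> \<in> D \<rightarrow>\<^sub>E {..<3}"
    then have e: "l (\<phi> u) * l (\<phi> v) = l (\<phi> v) * l (\<phi> u) + sc kl * (\<Sum>y<3. sc (eps (\<phi> u) (\<phi> v) y) * l y)"
      using uvD by (intro l_lie) auto
    show "lw l \<phi> A * (l (\<phi> u) * l (\<phi> v)) * lw l \<phi> B * lw r \<phi> q =
      lw l \<phi> A * (l (\<phi> v) * l (\<phi> u)) * lw l \<phi> B * lw r \<phi> q +
      lw l \<phi> A * (sc kl * (\<Sum>y<3. sc (eps (\<phi> u) (\<phi> v) y) * l y)) * lw l \<phi> B * lw r \<phi> q"
      unfolding e by (simp only: distrib_left distrib_right)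
  qed
  also have "(\<Sum>\<phi>\<in>D\<rightarrow>\<^sub>E{..<3}. lw l \<phi> A * (l (\<phi> v) * l (\<phi> u)) * lw l \<phi> B * lw r \<phi> q) = Pv l r (A@[v,u]@B) q"
    unfolding Pv_def D1 by (simp add: mult.assoc)
  also have "(\<Sum>\<phi>\<in>D\<rightarrow>\<^sub>E{..<3}. lw l \<phi> A * (sc kl * (\<Sum>y<3. sc (eps (\<phi> u) (\<phi> v) y) * l y)) * lw l \<phi> B * lw r \<phi> q)
      = sc kl * Tv sc l r (A@[t]@B) q u v t"
  proof -
    have "Tv sc l r (A@[t]@B) q u v t = (\<Sum>\<phi>\<in>insert t D\<rightarrow>\<^sub>E{..<3}. sc (eps (\<phi> u) (\<phi> v) (\<phi> t)) * (lw l \<phi> (A@[t]@B) * lw r \<phi> q))"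
      unfolding Tv_def D1 by simp
    also have "\<dots> = (\<Sum>\<phi>\<in>D\<rightarrow>\<^sub>E{..<3}. \<Sum>y<3. sc (eps (\<phi> u) (\<phi> v) y) * (lw l \<phi> A * l y * lw l \<phi> B * lw r \<phi> q))"
      using tD by (simp add: sum_PiE_insert lw_upd mult.assoc)
    finally have "sc kl * Tv sc l r (A@[t]@B) q u v t = (\<Sum>\<phi>\<in>D\<rightarrow>\<^sub>E{..<3}. \<Sum>y<3. sc kl * (sc (eps (\<phi> u) (\<phi> v) y) * (lw l \<phi> A * l y * lw l \<phi> B * lw r \<phi> q)))"
      by (simp add: sum_distrib_left)
    moreover have "(\<Sum>\<phi>\<in>D\<rightarrow>\<^sub>E{..<3}. lw l \<phi> A * (sc kl * (\<Sum>y<3. sc (eps (\<phi> u) (\<phi> v) y) * l y)) * lw l \<phi> B * lw r \<phi> q)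
       = (\<Sum>\<phi>\<in>D\<rightarrow>\<^sub>E{..<3}. \<Sum>y<3. sc kl * (sc (eps (\<phi> u) (\<phi> v) y) * (lw l \<phi> A * l y * lw l \<phi> B * lw r \<phi> q)))"
      by (simp add: sum_distrib_left sum_distrib_right lw_sc l_sc sc_mult_assoc mult.assoc)
    ultimately show ?thesis by simp
  qed
  finally show ?thesis .
qed


lemma Pv_sym: "Pv r l q p = Pv l r p q"
proof -
  have S: "set (q @ p) = set (p @ q)" by auto
  show ?thesis unfolding Pv_def S
    by (rule sum.cong[OF refl]) (rule lw_lr_comm[symmetric]; auto)
qed

lemma Tv_sym: "Tv sc r l q p a b c = Tv sc l r p q a b c"
proof -
  have S: "set (q @ p) = set (p @ q)" by auto
  show ?thesis unfolding Tv_def S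
    by (rule sum.cong[OF refl]) (subst lw_lr_comm; auto)
qed

lemma Om_sym: "Om r l = Om l r"
  unfolding Om_def by (rule sum.cong[OF refl]) (simp add: lr_comm)

lemma Tv_swap12: "Tv sc l r p q b a c = - Tv sc l r p q a b c"
  unfolding Tv_def sum_negf[symmetric]
  by (rule sum.cong[OF refl]) (metis eps_swap12 sc_uminus mult_minus_left)

lemma Tv_cyc: "Tv sc l r p q b c a = Tv sc l r p q a b c"
  unfolding Tv_def
  by (rule sum.cong[OF refl]) (metis eps_cyc)

lemma adj:
  assumes ab: "a \<noteq> b" "a \<notin> set (A@B@q)" "b \<notin> set (A@B@q)" and c: "c \<in> set (A@B@q)"
  shows "Tv sc l r (A@[a,b]@B) q a b c = sc kl * Pv l r (A@[c]@B) q"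
proof -
  define D where "D = set (A@B@q)"
  have D1: "set ((A@[a,b]@B) @ q) = insert a (insert b D)" "set ((A@[c]@B) @ q) = D"
    using c by (auto simp: D_def)
  have aD: "a \<notin> insert b D" "b \<notin> D" "a \<notin> set A" "a \<notin> set B" "a \<notin> set q"
     "b \<notin> set A" "b \<notin> set B" "b \<notin> set q" "c \<noteq> a" "c \<noteq> b" "c \<in> D"
    using ab c by (auto simp: D_def)
  have "Tv sc l r (A@[a,b]@B) q a b c = (\<Sum>\<phi>\<in>D\<rightarrow>\<^sub>E{..<3}. \<Sum>y<3. \<Sum>x<3.
      sc (eps x y (\<phi> c)) * (lw l \<phi> A * (l x * l y) * lw l \<phi> B * lw r \<phi> q))"
    unfolding Tv_def D1 using aD by (simp add: sum_PiE_insert lw_upd mult.assoc)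
  also have "\<dots> = (\<Sum>\<phi>\<in>D\<rightarrow>\<^sub>E{..<3}. lw l \<phi> A * (\<Sum>x<3. \<Sum>y<3. sc (eps x y (\<phi> c)) * (l x * l y)) * lw l \<phi> B * lw r \<phi> q)"
    by (rule sum.cong[OF refl]) (subst sum.swap, simp add: sum_distrib_left sum_distrib_right lw_sc l_sc mult.assoc)
  also have "\<dots> = (\<Sum>\<phi>\<in>D\<rightarrow>\<^sub>E{..<3}. lw l \<phi> A * (sc kl * l (\<phi> c)) * lw l \<phi> B * lw r \<phi> q)"
    by (rule sum.cong[OF refl]) (simp add: l_eps PiE3 aD)
  also have "\<dots> = sc kl * Pv l r (A@[c]@B) q"
    unfolding Pv_def D1 by (simp add: sum_distrib_left lw_sc l_sc mult.assoc)
  finally show ?thesis .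
qed

lemma slide:
  assumes a: "a \<notin> set (A@B@q)" and f: "f \<in> set (A@B@q)"
    and bc: "b \<in> set (A@B@q)" "c \<in> set (A@B@q)" "b \<noteq> c" "f \<noteq> b" "f \<noteq> c"
    and g: "g \<notin> set (A@[a,f]@B@q)"
  shows "Tv sc l r (A@[a,f]@B) q a b c = Tv sc l r (A@[f,a]@B) q a b c
     + sc kl * (Pv l r (map (id(c:=g)) (map (id(b:=f)) (A@[g]@B))) (map (id(c:=g)) (map (id(b:=f)) q))
              - Pv l r (map (id(c:=f)) (map (id(b:=g)) (A@[g]@B))) (map (id(c:=f)) (map (id(b:=g)) q)))"
proof -
  define D where "D = set (A@B@q)"
  define w where "w = A@[g]@B"
  define F where "F = (\<lambda>\<psi>. lw l \<psi> w * lw r \<psi> q)"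
  have fin: "finite D" by (simp add: D_def)
  have D1: "set ((A@[a,f]@B) @ q) = insert a D" "set ((A@[f,a]@B) @ q) = insert a D" "set (w @ q) = insert g D"
    using f by (auto simp: D_def w_def)
  have aD: "a \<notin> D" "a \<notin> set A" "a \<notin> set B" "a \<notin> set q" "b \<noteq> a" "c \<noteq> a" "f \<noteq> a"
    "b \<in> D" "c \<in> D" "f \<in> D" "g \<notin> D" "g \<noteq> a" "g \<noteq> b" "g \<noteq> c" "g \<noteq> f"
    "g \<notin> set A" "g \<notin> set B" "g \<notin> set q"
    using a f bc g by (auto simp: D_def)
  have "Tv sc l r (A@[a,f]@B) q a b c = (\<Sum>\<phi>\<in>insert a D\<rightarrow>\<^sub>E{..<3}. sc (eps (\<phi> a) (\<phi> b) (\<phi> c)) *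
      (lw l \<phi> A * (l (\<phi> a) * l (\<phi> f)) * lw l \<phi> B * lw r \<phi> q))"
    unfolding Tv_def D1 by (simp add: mult.assoc)
  also have "\<dots> = (\<Sum>\<phi>\<in>insert a D\<rightarrow>\<^sub>E{..<3}. sc (eps (\<phi> a) (\<phi> b) (\<phi> c)) *
      (lw l \<phi> A * (l (\<phi> f) * l (\<phi> a)) * lw l \<phi> B * lw r \<phi> q))
     + (\<Sum>\<phi>\<in>insert a D\<rightarrow>\<^sub>E{..<3}. sc (eps (\<phi> a) (\<phi> b) (\<phi> c)) *
      (lw l \<phi> A * (sc kl * (\<Sum>y<3. sc (eps (\<phi> a) (\<phi> f) y) * l y)) * lw l \<phi> B * lw r \<phi> q))"
    unfolding sum.distrib[symmetric]
  proof (rule sum.cong[OF refl])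
    fix \<phi> :: "nat \<Rightarrow> nat" assume "\<phi> \<in> insert a D \<rightarrow>\<^sub>E {..<3}"
    then have e: "l (\<phi> a) * l (\<phi> f) = l (\<phi> f) * l (\<phi> a) + sc kl * (\<Sum>y<3. sc (eps (\<phi> a) (\<phi> f) y) * l y)"
      using aD by (intro l_lie) auto
    show "sc (eps (\<phi> a) (\<phi> b) (\<phi> c)) * (lw l \<phi> A * (l (\<phi> a) * l (\<phi> f)) * lw l \<phi> B * lw r \<phi> q) =
      sc (eps (\<phi> a) (\<phi> b) (\<phi> c)) * (lw l \<phi> A * (l (\<phi> f) * l (\<phi> a)) * lw l \<phi> B * lw r \<phi> q) +
      sc (eps (\<phi> a) (\<phi> b) (\<phi> c)) * (lw l \<phi> A * (sc kl * (\<Sum>y<3. sc (eps (\<phi> a) (\<phi> f) y) * l y)) * lw l \<phi> B * lw r \<phi> q)"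
      unfolding e by (simp only: distrib_left distrib_right)
  qed
  also have "(\<Sum>\<phi>\<in>insert a D\<rightarrow>\<^sub>E{..<3}. sc (eps (\<phi> a) (\<phi> b) (\<phi> c)) *
      (lw l \<phi> A * (l (\<phi> f) * l (\<phi> a)) * lw l \<phi> B * lw r \<phi> q)) = Tv sc l r (A@[f,a]@B) q a b c"
    unfolding Tv_def D1 by (simp add: mult.assoc)
  also have "(\<Sum>\<phi>\<in>insert a D\<rightarrow>\<^sub>E{..<3}. sc (eps (\<phi> a) (\<phi> b) (\<phi> c)) *
      (lw l \<phi> A * (sc kl * (\<Sum>y<3. sc (eps (\<phi> a) (\<phi> f) y) * l y)) * lw l \<phi> B * lw r \<phi> q))
    = sc kl * (\<Sum>\<phi>\<in>D\<rightarrow>\<^sub>E{..<3}. \<Sum>y<3. sc (\<Sum>x<3. eps x (\<phi> b) (\<phi> c) * eps x (\<phi> f) y) *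
         (lw l \<phi> A * l y * lw l \<phi> B * lw r \<phi> q))"
  proof -
    have "(\<Sum>\<phi>\<in>insert a D\<rightarrow>\<^sub>E{..<3}. sc (eps (\<phi> a) (\<phi> b) (\<phi> c)) *
      (lw l \<phi> A * (sc kl * (\<Sum>y<3. sc (eps (\<phi> a) (\<phi> f) y) * l y)) * lw l \<phi> B * lw r \<phi> q))
      = (\<Sum>\<phi>\<in>D\<rightarrow>\<^sub>E{..<3}. \<Sum>x<3. sc (eps x (\<phi> b) (\<phi> c)) *
      (lw l \<phi> A * (sc kl * (\<Sum>y<3. sc (eps x (\<phi> f) y) * l y)) * lw l \<phi> B * lw r \<phi> q))"
      using aD by (simp add: sum_PiE_insert lw_upd)
    also have "\<dots> = (\<Sum>\<phi>\<in>D\<rightarrow>\<^sub>E{..<3}. \<Sum>x<3. \<Sum>y<3. sc kl * (sc (eps x (\<phi> b) (\<phi> c) * eps x (\<phi> f) y) *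
      (lw l \<phi> A * l y * lw l \<phi> B * lw r \<phi> q)))"
      by (simp add: sum_distrib_left sum_distrib_right lw_sc l_sc sc_mult_assoc mult.assoc mult.commute mult.left_commute)
    also have "\<dots> = (\<Sum>\<phi>\<in>D\<rightarrow>\<^sub>E{..<3}. \<Sum>y<3. \<Sum>x<3. sc kl * (sc (eps x (\<phi> b) (\<phi> c) * eps x (\<phi> f) y) *
      (lw l \<phi> A * l y * lw l \<phi> B * lw r \<phi> q)))"
      by (rule sum.cong[OF refl]) (rule sum.swap)
    also have "\<dots> = sc kl * (\<Sum>\<phi>\<in>D\<rightarrow>\<^sub>E{..<3}. \<Sum>y<3. sc (\<Sum>x<3. eps x (\<phi> b) (\<phi> c) * eps x (\<phi> f) y) *
         (lw l \<phi> A * l y * lw l \<phi> B * lw r \<phi> q))"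
      by (simp add: sum_distrib_left sum_distrib_right sc_sum)
    finally show ?thesis .
  qed
  also have "(\<Sum>\<phi>\<in>D\<rightarrow>\<^sub>E{..<3}. \<Sum>y<3. sc (\<Sum>x<3. eps x (\<phi> b) (\<phi> c) * eps x (\<phi> f) y) *
         (lw l \<phi> A * l y * lw l \<phi> B * lw r \<phi> q))
     = (\<Sum>\<psi>\<in>insert g D\<rightarrow>\<^sub>E{..<3}. sc (\<Sum>x<3. eps x (\<psi> b) (\<psi> c) * eps x (\<psi> f) (\<psi> g)) * F \<psi>)"
    using aD by (simp add: sum_PiE_insert lw_upd F_def w_def mult.assoc)
  also have "\<dots> = (\<Sum>\<psi>\<in>insert g D\<rightarrow>\<^sub>E{..<3}. (if \<psi> c = \<psi> g then (if \<psi> b = \<psi> f then F \<psi> else 0) else 0))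
     - (\<Sum>\<psi>\<in>insert g D\<rightarrow>\<^sub>E{..<3}. (if \<psi> c = \<psi> f then (if \<psi> b = \<psi> g then F \<psi> else 0) else 0))"
    unfolding sum_subtractf[symmetric]
    by (rule sum.cong[OF refl]) (auto simp: eps_contract PiE3 aD sc_diff left_diff_distrib)
  also have "(\<Sum>\<psi>\<in>insert g D\<rightarrow>\<^sub>E{..<3}. (if \<psi> c = \<psi> g then (if \<psi> b = \<psi> f then F \<psi> else 0) else 0))
     = Pv l r (map (id(c:=g)) (map (id(b:=f)) (A@[g]@B))) (map (id(c:=g)) (map (id(b:=f)) q))"
  proof -
    have "(\<Sum>\<psi>\<in>insert g D\<rightarrow>\<^sub>E{..<3}. (if \<psi> c = \<psi> g then (if \<psi> b = \<psi> f then F \<psi> else 0) else 0))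
      = (\<Sum>\<phi>\<in>(insert g D - {c})\<rightarrow>\<^sub>E{..<3}. (if \<phi> b = \<phi> f then F (\<phi>(c := \<phi> g)) else 0))"
      using aD bc fin by (subst sum_PiE_delta) auto
    also have "\<dots> = (\<Sum>\<phi>\<in>(insert g D - {c} - {b})\<rightarrow>\<^sub>E{..<3}. F ((\<phi>(b := \<phi> f))(c := \<phi> g)))"
      using aD bc fin by (subst sum_PiE_delta) auto
    also have "insert g D - {c} - {b} = set (map (id(c:=g)) (map (id(b:=f)) (A@[g]@B)) @ map (id(c:=g)) (map (id(b:=f)) q))"
      using aD bc by (auto simp: D_def)
    also have "(\<Sum>\<phi>\<in>set (map (id(c:=g)) (map (id(b:=f)) (A@[g]@B)) @ map (id(c:=g)) (map (id(b:=f)) q)) \<rightarrow>\<^sub>E{..<3}.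
         F ((\<phi>(b := \<phi> f))(c := \<phi> g))) = Pv l r (map (id(c:=g)) (map (id(b:=f)) (A@[g]@B))) (map (id(c:=g)) (map (id(b:=f)) q))"
    proof -
      have e: "(\<phi>(b := \<phi> f))(c := \<phi> g) = \<phi> \<circ> id(c:=g) \<circ> id(b:=f)" for \<phi> :: "nat \<Rightarrow> nat"
        using aD bc by (auto simp: fun_eq_iff)
      show ?thesis unfolding Pv_def F_def w_def
        by (rule sum.cong[OF refl]) (simp only: e lw_map)
    qed
    finally show ?thesis .
  qed
  also have "(\<Sum>\<psi>\<in>insert g D\<rightarrow>\<^sub>E{..<3}. (if \<psi> c = \<psi> f then (if \<psi> b = \<psi> g then F \<psi> else 0) else 0))
     = Pv l r (map (id(c:=f)) (map (id(b:=g)) (A@[g]@B))) (map (id(c:=f)) (map (id(b:=g)) q))"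
  proof -
    have "(\<Sum>\<psi>\<in>insert g D\<rightarrow>\<^sub>E{..<3}. (if \<psi> c = \<psi> f then (if \<psi> b = \<psi> g then F \<psi> else 0) else 0))
      = (\<Sum>\<phi>\<in>(insert g D - {c})\<rightarrow>\<^sub>E{..<3}. (if \<phi> b = \<phi> g then F (\<phi>(c := \<phi> f)) else 0))"
      using aD bc fin by (subst sum_PiE_delta) auto
    also have "\<dots> = (\<Sum>\<phi>\<in>(insert g D - {c} - {b})\<rightarrow>\<^sub>E{..<3}. F ((\<phi>(b := \<phi> g))(c := \<phi> f)))"
      using aD bc fin by (subst sum_PiE_delta) auto
    also have "insert g D - {c} - {b} = set (map (id(c:=f)) (map (id(b:=g)) (A@[g]@B)) @ map (id(c:=f)) (map (id(b:=g)) q))"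
      using aD bc by (auto simp: D_def)
    also have "(\<Sum>\<phi>\<in>set (map (id(c:=f)) (map (id(b:=g)) (A@[g]@B)) @ map (id(c:=f)) (map (id(b:=g)) q)) \<rightarrow>\<^sub>E{..<3}.
         F ((\<phi>(b := \<phi> g))(c := \<phi> f))) = Pv l r (map (id(c:=f)) (map (id(b:=g)) (A@[g]@B))) (map (id(c:=f)) (map (id(b:=g)) q))"
    proof -
      have e: "(\<phi>(b := \<phi> g))(c := \<phi> f) = \<phi> \<circ> id(c:=f) \<circ> id(b:=g)" for \<phi> :: "nat \<Rightarrow> nat"
        using aD bc by (auto simp: fun_eq_iff)
      show ?thesis unfolding Pv_def F_def w_def
        by (rule sum.cong[OF refl]) (simp only: e lw_map)
    qed
    finally show ?thesis .
  qed
  finally show ?thesis .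
qed


lemma br:
  assumes "u \<notin> set p" "u \<notin> set q"
  shows "Pv l r (u#p) (u#q) = Om l r * Pv l r p q"
proof -
  have D1: "set ((u#p) @ (u#q)) = insert u (set (p@q))" by auto
  have "Pv l r (u#p) (u#q) = (\<Sum>\<phi>\<in>set (p@q)\<rightarrow>\<^sub>E{..<3}. \<Sum>y<3. l y * (lw l \<phi> p * r y) * lw r \<phi> q)"
    unfolding Pv_def D1 using assms by (simp add: sum_PiE_insert lw_upd mult.assoc)
  also have "\<dots> = (\<Sum>\<phi>\<in>set (p@q)\<rightarrow>\<^sub>E{..<3}. \<Sum>y<3. (l y * r y) * (lw l \<phi> p * lw r \<phi> q))"
    by (intro sum.cong refl) (simp add: lw_r_comm PiE3 mult.assoc)
  also have "\<dots> = Om l r * Pv l r p q"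
    by (simp only: Om_def Pv_def sum_distrib_left sum_distrib_right, (rule sum.swap)?)
  finally show ?thesis .
qed

lemma arch:
  assumes "u \<notin> set p" "u \<notin> set q"
  shows "Pv l r (u#u#p) q = C * Pv l r p q"
proof -
  have D1: "set ((u#u#p) @ q) = insert u (set (p@q))" by auto
  have "Pv l r (u#u#p) q = (\<Sum>\<phi>\<in>set (p@q)\<rightarrow>\<^sub>E{..<3}. \<Sum>y<3. (l y * l y) * (lw l \<phi> p * lw r \<phi> q))"
    unfolding Pv_def D1 using assms by (simp add: sum_PiE_insert lw_upd mult.assoc)
  also have "\<dots> = C * Pv l r p q"
    by (simp only: l_cas[symmetric] Pv_def sum_distrib_left sum_distrib_right, (rule sum.swap)?)
  finally show ?thesis .
qed

lemma arch_end:
  assumes "u \<notin> set p" "u \<notin> set q"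
  shows "Pv l r (p @ [u,u]) q = C * Pv l r p q"
proof -
  have D1: "set ((p @ [u,u]) @ q) = insert u (set (p@q))" by auto
  have "Pv l r (p @ [u,u]) q = (\<Sum>\<phi>\<in>set (p@q)\<rightarrow>\<^sub>E{..<3}. \<Sum>y<3. lw l \<phi> p * (l y * l y) * lw r \<phi> q)"
    unfolding Pv_def D1 using assms by (simp add: sum_PiE_insert lw_upd mult.assoc)
  also have "\<dots> = (\<Sum>\<phi>\<in>set (p@q)\<rightarrow>\<^sub>E{..<3}. lw l \<phi> p * C * lw r \<phi> q)"
    by (simp add: l_cas[symmetric] sum_distrib_left sum_distrib_right)
  also have "\<dots> = C * Pv l r p q"
    unfolding Pv_def sum_distrib_left
  proof (intro sum.cong refl)
    fix \<phi> :: "nat \<Rightarrow> nat" assume "\<phi> \<in> set (p @ q) \<rightarrow>\<^sub>E {..<3}"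
    then have "\<forall>x\<in>set p. \<phi> x < 3" by auto
    then have "C * lw l \<phi> p = lw l \<phi> p * C" by (rule C_lw_l)
    then show "lw l \<phi> p * C * lw r \<phi> q = C * (lw l \<phi> p * lw r \<phi> q)" by (simp add: mult.assoc[symmetric])
  qed
  finally show ?thesis .
qed

lemma Spn_neg: "x \<in> Spn sc C G m \<Longrightarrow> - x \<in> Spn sc C G m"
  using Spn.scal[of x sc C G m "-1"] by (simp add: sc_neg1)

lemma Spn_diff: assumes "x \<in> Spn sc C G m" "y \<in> Spn sc C G m" shows "x - y \<in> Spn sc C G m"
proof -
  have "x + - y \<in> Spn sc C G m" using assms by (intro Spn.add Spn_neg)
  then show ?thesis by (simp only: diff_conv_add_uminus)
qed

lemma Spn_Om: "x \<in> Spn sc C (\<lambda>j. Om l r ^ j) m \<Longrightarrow> Om l r * x \<in> Spn sc C (\<lambda>j. Om l r ^ j) (Suc m)"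
proof (induction rule: Spn.induct)
  case zero then show ?case by (simp add: Spn.zero)
next
  case (add x y) then show ?case by (simp add: distrib_left Spn.add)
next
  case (scal x z) then show ?case by (simp add: sc_left_comm Spn.scal)
next
  case (cmul x)
  have "Om l r * (C * x) = C * (Om l r * x)" by (metis Om_C mult.assoc)
  then show ?case using cmul Spn.cmul by metis
next
  case (gen j)
  have "(\<lambda>j. Om l r ^ j) (Suc j) \<in> Spn sc C (\<lambda>j. Om l r ^ j) (Suc m)" by (rule Spn.gen) (use gen in simp)
  then show ?case by simp
qed

end

definition wfd :: "nat list \<Rightarrow> bool" where
  "wfd w = (\<forall>x\<in>set w. count_list w x = 2)"

definition wft :: "nat list \<Rightarrow> nat \<Rightarrow> nat \<Rightarrow> nat \<Rightarrow> bool" where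
  "wft w a b c = (distinct [a,b,c] \<and> count_list w a = 1 \<and> count_list w b = 1 \<and> count_list w c = 1
      \<and> (\<forall>x\<in>set w. x \<notin> {a,b,c} \<longrightarrow> count_list w x = 2))"

definition IHP :: "(complex \<Rightarrow> 'a::ring_1) \<Rightarrow> 'a \<Rightarrow> (nat \<Rightarrow> 'a) \<Rightarrow> (nat \<Rightarrow> 'a) \<Rightarrow> nat \<Rightarrow> bool" where
  "IHP sc C l r L = (\<forall>p q. length (p @ q) < L \<longrightarrow> wfd (p @ q) \<longrightarrow>
       Pv l r p q \<in> Spn sc C (\<lambda>j. Om l r ^ j) (length (p @ q) div 2 + 1))"

lemma IHP_mono: "IHP sc C l r L \<Longrightarrow> L' \<le> L \<Longrightarrow> IHP sc C l r L'"
  unfolding IHP_def by auto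

lemma IHP_use: "IHP sc C l r L \<Longrightarrow> length (p @ q) < L \<Longrightarrow> wfd (p @ q) \<Longrightarrow>
   Pv l r p q \<in> Spn sc C (\<lambda>j. Om l r ^ j) (length (p @ q) div 2 + 1)"
  unfolding IHP_def by blast

lemma count_in: "x \<in> set w \<longleftrightarrow> count_list w x \<noteq> 0"
  by (simp add: count_list_0_iff)

lemma wfd_perm: "(\<And>x. count_list w x = count_list w' x) \<Longrightarrow> wfd w = wfd w'"
  unfolding wfd_def by (metis count_in)

lemma wft_perm: "(\<And>x. count_list w x = count_list w' x) \<Longrightarrow> wft w a b c = wft w' a b c"
  unfolding wft_def by (metis count_in)

lemma wfd_swap: "wfd (p @ q) = wfd (q @ p)"
  by (rule wfd_perm) simp

lemma wft_swap: "wft (p @ q) a b c = wft (q @ p) a b c"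
  by (rule wft_perm) simp

lemma count_ren: "count_list (map (id(b:=f)) w) x =
   (if b = f then count_list w x else if x = b then 0 else if x = f then count_list w f + count_list w b else count_list w x)"
  by (induction w) auto

lemma wfd_ren:
  assumes "count_list W p1 = 1" "count_list W b = 1" "count_list W p2 = 1" "count_list W c = 1"
    "distinct [p1, b, p2, c]" "\<And>t. t \<in> set W \<Longrightarrow> t \<notin> {p1,b,p2,c} \<Longrightarrow> count_list W t = 2"
  shows "wfd (map (id(c:=p2)) (map (id(b:=p1)) W))"
  unfolding wfd_def
proof
  fix x assume "x \<in> set (map (id(c:=p2)) (map (id(b:=p1)) W))"
  then have x: "count_list (map (id(c:=p2)) (map (id(b:=p1)) W)) x \<noteq> 0" by (metis count_in)
  show "count_list (map (id(c:=p2)) (map (id(b:=p1)) W)) x = 2"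
  proof (cases "x \<in> {p1,b,p2,c}")
    case True then show ?thesis using assms x by (auto simp: count_ren simp del: map_map)
  next
    case False
    have c1: "count_list (map (id(c:=p2)) (map (id(b:=p1)) W)) x = count_list W x"
      using False assms(5) by (simp add: count_ren del: map_map)
    then have "x \<in> set W" using x by (metis count_in)
    then show ?thesis using c1 False assms(6) by simp
  qed
qed

lemma fresh_ex: "\<exists>g::nat. g \<notin> set w"
  using finite_set[of w] infinite_UNIV_nat by (metis ex_new_if_finite)

context sl2pair
begin

lemma IHP_sym: "IHP sc C r l L = IHP sc C l r L"
  unfolding IHP_def Om_sym
proof (intro iffI allI impI)
  fix p q :: "nat list"
  assume H: "\<forall>p q. length (p @ q) < L \<longrightarrow> wfd (p @ q) \<longrightarrow> Pv r l p q \<in> Spn sc C (\<lambda>j. Om l r ^ j) (length (p @ q) div 2 + 1)"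
    and a: "length (p @ q) < L" "wfd (p @ q)"
  have "Pv r l q p \<in> Spn sc C (\<lambda>j. Om l r ^ j) (length (q @ p) div 2 + 1)"
    using H a wfd_swap[of p q] by simp
  then show "Pv l r p q \<in> Spn sc C (\<lambda>j. Om l r ^ j) (length (p @ q) div 2 + 1)"
    by (simp add: Pv_sym add.commute)
next
  fix p q :: "nat list"
  assume H: "\<forall>p q. length (p @ q) < L \<longrightarrow> wfd (p @ q) \<longrightarrow> Pv l r p q \<in> Spn sc C (\<lambda>j. Om l r ^ j) (length (p @ q) div 2 + 1)"
    and a: "length (p @ q) < L" "wfd (p @ q)"
  have "Pv l r q p \<in> Spn sc C (\<lambda>j. Om l r ^ j) (length (q @ p) div 2 + 1)"
    using H a wfd_swap[of p q] by simp
  then show "Pv r l p q \<in> Spn sc C (\<lambda>j. Om l r ^ j) (length (p @ q) div 2 + 1)"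
    by (simp add: Pv_sym add.commute)
qed

lemma tr_inner:
  assumes "IHP sc C l r (length (A@[x]@M@[y]@B@q))"
    and "wft (A@[x]@M@[y]@B@q) x y z"
    and "set M \<inter> {x,y,z} = {}"
  shows "Tv sc l r (A@[x]@M@[y]@B) q x y z \<in> Spn sc C (\<lambda>j. Om l r ^ j) ((length (A@[x]@M@[y]@B@q) + 1) div 2)"
  using assms
proof (induction M arbitrary: A)
  case Nil
  let ?L = "length (A@[x]@[]@[y]@B@q)"
  have w: "distinct [x,y,z]" "count_list (A@B@q) x = 0" "count_list (A@B@q) y = 0" "count_list (A@B@q) z = 1"
    "\<And>t. t \<in> set (A@[x]@[y]@B@q) \<Longrightarrow> t \<notin> {x,y,z} \<Longrightarrow> count_list (A@[x]@[y]@B@q) t = 2"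
    using Nil.prems(2) by (auto simp: wft_def)
  have xyz: "x \<notin> set (A@B@q)" "y \<notin> set (A@B@q)" "z \<in> set (A@B@q)"
    using w by (simp_all only: count_in, (simp_all)?)
  have "Tv sc l r (A@[x,y]@B) q x y z = sc kl * Pv l r (A@[z]@B) q"
    using w xyz by (intro adj) auto
  moreover have "Pv l r (A@[z]@B) q \<in> Spn sc C (\<lambda>j. Om l r ^ j) (length ((A@[z]@B)@q) div 2 + 1)"
  proof -
    have "wfd ((A@[z]@B)@q)"
      unfolding wfd_def
    proof
      fix t assume t: "t \<in> set ((A@[z]@B)@q)"
      show "count_list ((A@[z]@B)@q) t = 2"
      proof (cases "t = z")
        case True then show ?thesis using w by simp
      next
        case False
        then have "t \<noteq> x" "t \<noteq> y" using t xyz by auto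
        then show ?thesis using w(5)[of t] t False by auto
      qed
    qed
    moreover have "length ((A@[z]@B)@q) < ?L" by simp
    ultimately show ?thesis using IHP_use[OF Nil.prems(1)] by blast
  qed
  ultimately show ?case
    by (auto intro!: Spn.scal elim!: Spn_mono)
next
  case (Cons f M)
  let ?R = "M@[y]@B"
  let ?L = "length (A@[x]@(f#M)@[y]@B@q)"
  have w: "distinct [x,y,z]" "count_list (A@[x]@(f#M)@[y]@B@q) x = 1" "count_list (A@[x]@(f#M)@[y]@B@q) y = 1"
    "count_list (A@[x]@(f#M)@[y]@B@q) z = 1"
    "\<And>t. t \<in> set (A@[x]@(f#M)@[y]@B@q) \<Longrightarrow> t \<notin> {x,y,z} \<Longrightarrow> count_list (A@[x]@(f#M)@[y]@B@q) t = 2"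
    using Cons.prems(2) by (auto simp: wft_def)
  have fM: "f \<notin> {x,y,z}" "set M \<inter> {x,y,z} = {}" using Cons.prems(3) by auto
  have cf: "count_list (A@[x]@(f#M)@[y]@B@q) f = 2" using w(5)[of f] fM by auto
  obtain g where g: "g \<notin> set (A@[x,f]@?R@q)" using fresh_ex by blast
  have cx: "count_list (A@?R@q) x = 0" using w(2) w(1) fM by auto
  have cf1: "count_list (A@?R@q) f = 1" using cf fM by simp
  have cy: "count_list (A@?R@q) y = 1" using w(3) w(1) fM by auto
  have cz: "count_list (A@?R@q) z = 1" using w(4) w(1) fM by auto
  have conds: "x \<notin> set (A@?R@q)" "f \<in> set (A@?R@q)" "y \<in> set (A@?R@q)" "z \<in> set (A@?R@q)"
    using cx cf1 cy cz by (simp_all only: count_in, (simp_all)?)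
  have sl: "Tv sc l r (A@[x,f]@?R) q x y z = Tv sc l r (A@[f,x]@?R) q x y z
     + sc kl * (Pv l r (map (id(z:=g)) (map (id(y:=f)) (A@[g]@?R))) (map (id(z:=g)) (map (id(y:=f)) q))
              - Pv l r (map (id(z:=f)) (map (id(y:=g)) (A@[g]@?R))) (map (id(z:=f)) (map (id(y:=g)) q)))"
    using conds w(1) fM g by (intro slide) auto
  have IH: "Tv sc l r ((A@[f])@[x]@M@[y]@B) q x y z \<in> Spn sc C (\<lambda>j. Om l r ^ j) ((length ((A@[f])@[x]@M@[y]@B@q) + 1) div 2)"
  proof (rule Cons.IH)
    show "IHP sc C l r (length ((A@[f])@[x]@M@[y]@B@q))" using Cons.prems(1) by simp
    show "wft ((A@[f])@[x]@M@[y]@B@q) x y z" using Cons.prems(2) by (subst wft_perm[where w' = "A@[x]@(f#M)@[y]@B@q"]) auto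
    show "set M \<inter> {x,y,z} = {}" by (rule fM(2))
  qed
  define W where "W = A@[g]@?R@q"
  have cW: "count_list W f = 1" "count_list W y = 1" "count_list W g = 1" "count_list W z = 1"
    "\<And>t. t \<in> set W \<Longrightarrow> t \<notin> {f,y,g,z} \<Longrightarrow> count_list W t = 2"
  proof -
    show "count_list W f = 1" "count_list W y = 1" "count_list W z = 1"
      using cf1 cy cz g by (auto simp: W_def)
    show "count_list W g = 1" using g by (simp add: W_def)
    fix t assume t: "t \<in> set W" "t \<notin> {f,y,g,z}"
    then have "t \<noteq> x" using conds by (auto simp: W_def)
    then have "t \<in> set (A@[x]@(f#M)@[y]@B@q)" using t by (auto simp: W_def)
    then have "count_list (A@[x]@(f#M)@[y]@B@q) t = 2" by (rule w(5)) (use t \<open>t \<noteq> x\<close> in auto)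
    then show "count_list W t = 2" using t \<open>t \<noteq> x\<close> by (simp add: W_def)
  qed
  have dist: "distinct [f,y,g,z]" "distinct [g,y,f,z]" using g fM w(1) conds by auto
  have wf1: "wfd (map (id(z:=g)) (map (id(y:=f)) W))"
    using cW dist by (intro wfd_ren) auto
  have wf2: "wfd (map (id(z:=f)) (map (id(y:=g)) W))"
    using cW dist by (intro wfd_ren) auto
  have P1: "Pv l r (map (id(z:=g)) (map (id(y:=f)) (A@[g]@?R))) (map (id(z:=g)) (map (id(y:=f)) q))
      \<in> Spn sc C (\<lambda>j. Om l r ^ j) ((?L + 1) div 2)"
  proof -
    let ?X = "map (id(z:=g)) (map (id(y:=f)) (A@[g]@?R))" and ?Y = "map (id(z:=g)) (map (id(y:=f)) q)"
    have "?X @ ?Y = map (id(z:=g)) (map (id(y:=f)) W)" by (simp only: W_def map_append append_assoc)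
    then have wfXY: "wfd (?X @ ?Y)" and lenXY: "length (?X @ ?Y) = ?L - 1" using wf1 by (simp_all add: W_def)
    have "Pv l r ?X ?Y \<in> Spn sc C (\<lambda>j. Om l r ^ j) (length (?X @ ?Y) div 2 + 1)"
      using IHP_use[OF Cons.prems(1) _ wfXY] lenXY by simp
    then show ?thesis by (rule Spn_mono) (simp add: lenXY)
  qed
  have P2: "Pv l r (map (id(z:=f)) (map (id(y:=g)) (A@[g]@?R))) (map (id(z:=f)) (map (id(y:=g)) q))
      \<in> Spn sc C (\<lambda>j. Om l r ^ j) ((?L + 1) div 2)"
  proof -
    let ?X = "map (id(z:=f)) (map (id(y:=g)) (A@[g]@?R))" and ?Y = "map (id(z:=f)) (map (id(y:=g)) q)"
    have "?X @ ?Y = map (id(z:=f)) (map (id(y:=g)) W)" by (simp only: W_def map_append append_assoc)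
    then have wfXY: "wfd (?X @ ?Y)" and lenXY: "length (?X @ ?Y) = ?L - 1" using wf2 by (simp_all add: W_def)
    have "Pv l r ?X ?Y \<in> Spn sc C (\<lambda>j. Om l r ^ j) (length (?X @ ?Y) div 2 + 1)"
      using IHP_use[OF Cons.prems(1) _ wfXY] lenXY by simp
    then show ?thesis by (rule Spn_mono) (simp add: lenXY)
  qed
  have e: "A@[x]@(f#M)@[y]@B = A@[x,f]@?R" "(A@[f])@[x]@M@[y]@B = A@[f,x]@?R" by simp_all
  show ?case unfolding e sl
    using IH P1 P2 by (auto intro!: Spn.add Spn.scal Spn_diff)
qed


lemma Tv_perm:
  assumes "distinct [a,b,c]" "x \<in> {a,b,c}" "y \<in> {a,b,c}" "x \<noteq> y"
  obtains z where "z \<in> {a,b,c}" "distinct [x,y,z]" "a \<in> {x,y,z}" "b \<in> {x,y,z}" "c \<in> {x,y,z}"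
    "Tv sc l r p q x y z = Tv sc l r p q a b c \<or> Tv sc l r p q x y z = - Tv sc l r p q a b c"
proof -
  have t1: "Tv sc l r p q b c a = Tv sc l r p q a b c" by (rule Tv_cyc)
  have t2: "Tv sc l r p q c a b = Tv sc l r p q a b c" by (metis Tv_cyc)
  have t3: "Tv sc l r p q b a c = - Tv sc l r p q a b c" by (rule Tv_swap12)
  have t4: "Tv sc l r p q a c b = - Tv sc l r p q a b c" by (metis Tv_swap12 Tv_cyc)
  have t5: "Tv sc l r p q c b a = - Tv sc l r p q a b c" by (metis Tv_swap12 Tv_cyc)
  have "(x = a \<and> y = b) \<or> (x = b \<and> y = c) \<or> (x = c \<and> y = a) \<or> (x = b \<and> y = a) \<or> (x = a \<and> y = c) \<or> (x = c \<and> y = b)"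
    using assms by auto
  then show ?thesis
  proof (elim disjE conjE)
    assume "x = a" "y = b" then show ?thesis using that[of c] assms(1) by simp
  next
    assume "x = b" "y = c" then show ?thesis using that[of a] assms(1) t1 by auto
  next
    assume "x = c" "y = a" then show ?thesis using that[of b] assms(1) t2 by auto
  next
    assume "x = b" "y = a" then show ?thesis using that[of c] assms(1) t3 by auto
  next
    assume "x = a" "y = c" then show ?thesis using that[of b] assms(1) t4 by auto
  next
    assume "x = c" "y = b" then show ?thesis using that[of a] assms(1) t5 by auto
  qed
qed

end

lemma filter_legs: "distinct [a,b,c] \<Longrightarrow>
   length (filter (\<lambda>t. t \<in> {a,b,c}) w) = count_list w a + count_list w b + count_list w c"
  by (induction w) auto

context sl2pair
begin

lemma tr_p:
  assumes IH: "IHP sc C l r (length (p@q))" and wt: "wft (p@q) a b c"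
    and two: "2 \<le> length (filter (\<lambda>t. t \<in> {a,b,c}) p)"
  shows "Tv sc l r p q a b c \<in> Spn sc C (\<lambda>j. Om l r ^ j) ((length (p@q) + 1) div 2)"
proof -
  define P where "P = (\<lambda>t. t \<in> {a,b,c})"
  have two': "2 \<le> length (filter P p)" using two by (simp add: P_def)
  have "filter P p \<noteq> []" using two' by auto
  then have ex1: "\<exists>x\<in>set p. P x" using filter_empty_conv[of P p] by blast
  obtain A x p1 where p: "p = A @ x # p1" and xP: "P x" and A: "\<forall>t\<in>set A. \<not> P t"
    using split_list_first_prop[OF ex1] by blast
  have "filter P p = x # filter P p1" using p xP A by (simp add: filter_empty_conv)
  then have "filter P p1 \<noteq> []" using two' by auto
  then have ex2: "\<exists>y\<in>set p1. P y" using filter_empty_conv[of P p1] by blast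
  obtain M y B where p1: "p1 = M @ y # B" and yP: "P y" and M: "\<forall>t\<in>set M. \<not> P t"
    using split_list_first_prop[OF ex2] by blast
  have x: "x \<in> {a,b,c}" and y: "y \<in> {a,b,c}" using xP yP by (simp_all add: P_def)
  have d: "distinct [a,b,c]" and cnt: "count_list (p@q) a = 1" "count_list (p@q) b = 1" "count_list (p@q) c = 1"
    using wt by (auto simp: wft_def)
  have "count_list (p@q) x \<ge> 2 \<or> x \<noteq> y" using p p1 by auto
  then have xy: "x \<noteq> y" using x cnt by auto
  obtain z where z: "z \<in> {a,b,c}" "distinct [x,y,z]" "a \<in> {x,y,z}" "b \<in> {x,y,z}" "c \<in> {x,y,z}"
    and zT: "Tv sc l r p q x y z = Tv sc l r p q a b c \<or> Tv sc l r p q x y z = - Tv sc l r p q a b c"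
    using Tv_perm[OF d x y xy] by blast
  have pq: "p @ q = A@[x]@M@[y]@B@q" using p p1 by simp
  have wt': "wft (A@[x]@M@[y]@B@q) x y z"
    unfolding pq[symmetric] wft_def
  proof (intro conjI ballI impI)
    show "distinct [x,y,z]" by (rule z(2))
    show "count_list (p@q) x = 1" using x cnt by auto
    show "count_list (p@q) y = 1" using y cnt by auto
    show "count_list (p@q) z = 1" using z(1) cnt by auto
    fix t assume "t \<in> set (p@q)" "t \<notin> {x,y,z}"
    moreover have "t \<notin> {a,b,c}" using z(3,4,5) \<open>t \<notin> {x,y,z}\<close> by auto
    moreover have W5: "\<forall>x\<in>set (p@q). x \<notin> {a,b,c} \<longrightarrow> count_list (p@q) x = 2"
      using wt[unfolded wft_def] by (elim conjE) assumption
    ultimately show "count_list (p@q) t = 2" by blast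
  qed
  have "\<forall>t\<in>set M. t \<notin> {a,b,c}" using M by (simp add: P_def)
  then have "set M \<inter> {x,y,z} = {}" using x y z(1) by blast
  then have "Tv sc l r (A@[x]@M@[y]@B) q x y z \<in> Spn sc C (\<lambda>j. Om l r ^ j) ((length (A@[x]@M@[y]@B@q) + 1) div 2)"
    using IH wt' p p1 by (intro tr_inner) auto
  then have T: "Tv sc l r p q x y z \<in> Spn sc C (\<lambda>j. Om l r ^ j) ((length (p@q) + 1) div 2)"
    using p p1 by simp
  from zT show ?thesis
  proof
    assume "Tv sc l r p q x y z = Tv sc l r p q a b c" then show ?thesis using T by simp
  next
    assume "Tv sc l r p q x y z = - Tv sc l r p q a b c" then show ?thesis using Spn_neg[OF T] by simp
  qed
qed

lemma tr:
  assumes IH: "IHP sc C l r (length (p@q))" and wt: "wft (p@q) a b c"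
  shows "Tv sc l r p q a b c \<in> Spn sc C (\<lambda>j. Om l r ^ j) ((length (p@q) + 1) div 2)"
proof -
  interpret sw: sl2pair sc C r l kr kl by (rule sl2pair_swap[OF sl2pair_axioms])
  let ?P = "\<lambda>t. t \<in> {a,b,c}"
  have d: "distinct [a,b,c]" and cnt: "count_list (p@q) a = 1" "count_list (p@q) b = 1" "count_list (p@q) c = 1"
    using wt by (auto simp: wft_def)
  have "length (filter ?P p) + length (filter ?P q) = 3"
    using filter_legs[OF d, of "p@q"] cnt by simp
  then consider "2 \<le> length (filter ?P p)" | "2 \<le> length (filter ?P q)" by linarith
  then show ?thesis
  proof cases
    case 1 then show ?thesis using tr_p IH wt by blast
  next
    case 2
    have e: "length (q@p) = length (p@q)" by simp
    have "Tv sc r l q p a b c \<in> Spn sc C (\<lambda>j. Om r l ^ j) ((length (q@p) + 1) div 2)"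
    proof (rule sw.tr_p)
      show "IHP sc C r l (length (q@p))" unfolding e IHP_sym by (rule IH)
      show "wft (q@p) a b c" using wt wft_swap by blast
      show "2 \<le> length (filter ?P q)" by (rule 2)
    qed
    then show ?thesis unfolding Tv_sym Om_sym e .
  qed
qed

lemma key:
  assumes IH: "IHP sc C l r (length (A@[u,v]@B@q))" and wf: "wfd (A@[u,v]@B@q)"
  shows "Pv l r (A@[u,v]@B) q - Pv l r (A@[v,u]@B) q \<in> Spn sc C (\<lambda>j. Om l r ^ j) (length (A@[u,v]@B@q) div 2)"
proof (cases "u = v")
  case True then show ?thesis by (simp add: Spn.zero)
next
  case False
  obtain t where t: "t \<notin> set (A@[u,v]@B@q)" using fresh_ex by blast
  have cu: "count_list (A@[u,v]@B@q) u = 2" "count_list (A@[u,v]@B@q) v = 2"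
    using wf by (auto simp: wfd_def)
  have cu1: "count_list (A@B@q) u = 1" "count_list (A@B@q) v = 1" using cu False by auto
  then have uv: "u \<in> set (A@B@q)" "v \<in> set (A@B@q)" by (simp_all only: count_in, (simp_all)?)
  have sw: "Pv l r (A@[u,v]@B) q = Pv l r (A@[v,u]@B) q + sc kl * Tv sc l r (A@[t]@B) q u v t"
    using t uv by (rule swap1)
  have wt: "wft ((A@[t]@B)@q) u v t"
    unfolding wft_def
  proof (intro conjI ballI impI)
    show "distinct [u,v,t]" using False t by auto
    show "count_list ((A@[t]@B)@q) u = 1" "count_list ((A@[t]@B)@q) v = 1" "count_list ((A@[t]@B)@q) t = 1"
      using cu1 t False by auto
    fix x assume x: "x \<in> set ((A@[t]@B)@q)" "x \<notin> {u,v,t}"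
    then have "x \<in> set (A@[u,v]@B@q)" by auto
    then have "count_list (A@[u,v]@B@q) x = 2" using wf unfolding wfd_def by blast
    then show "count_list ((A@[t]@B)@q) x = 2" using x by simp
  qed
  have "Tv sc l r (A@[t]@B) q u v t \<in> Spn sc C (\<lambda>j. Om l r ^ j) ((length ((A@[t]@B)@q) + 1) div 2)"
    using IHP_mono[OF IH] wt by (intro tr) auto
  then have "sc kl * Tv sc l r (A@[t]@B) q u v t \<in> Spn sc C (\<lambda>j. Om l r ^ j) (length (A@[u,v]@B@q) div 2)"
    by (auto intro: Spn.scal)
  then show ?thesis using sw by simp
qed

lemma move:
  assumes IH: "IHP sc C l r (length (A@M@[u]@B@q))" and wf: "wfd (A@M@[u]@B@q)" and u: "u \<notin> set M"
  shows "Pv l r (A@M@[u]@B) q - Pv l r (A@[u]@M@B) q \<in> Spn sc C (\<lambda>j. Om l r ^ j) (length (A@M@[u]@B@q) div 2)"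
  using IH wf u
proof (induction M arbitrary: B rule: rev_induct)
  case Nil then show ?case by (simp add: Spn.zero)
next
  case (snoc v M)
  have k: "Pv l r ((A@M)@[v,u]@B) q - Pv l r ((A@M)@[u,v]@B) q \<in> Spn sc C (\<lambda>j. Om l r ^ j) (length ((A@M)@[v,u]@B@q) div 2)"
    using snoc.prems by (intro key) auto
  have i: "Pv l r (A@M@[u]@(v#B)) q - Pv l r (A@[u]@M@(v#B)) q \<in> Spn sc C (\<lambda>j. Om l r ^ j) (length (A@M@[u]@(v#B)@q) div 2)"
  proof (rule snoc.IH)
    show "IHP sc C l r (length (A@M@[u]@(v#B)@q))" using snoc.prems by simp
    show "wfd (A@M@[u]@(v#B)@q)" using snoc.prems(2) by (subst wfd_perm[where w'="A@(M@[v])@[u]@B@q"]) auto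
    show "u \<notin> set M" using snoc.prems by auto
  qed
  let ?N = "length (A@(M@[v])@[u]@B@q) div 2"
  let ?X = "Pv l r ((A@M)@[v,u]@B) q - Pv l r ((A@M)@[u,v]@B) q"
  let ?Y = "Pv l r (A@M@[u]@(v#B)) q - Pv l r (A@[u]@M@(v#B)) q"
  have eq: "Pv l r (A@(M@[v])@[u]@B) q - Pv l r (A@[u]@(M@[v])@B) q = ?X + ?Y"
    by simp
  have k': "?X \<in> Spn sc C (\<lambda>j. Om l r ^ j) ?N" using k by simp
  have i': "?Y \<in> Spn sc C (\<lambda>j. Om l r ^ j) ?N" using i by simp
  show ?case unfolding eq by (rule Spn.add[OF k' i'])
qed

lemma move_q:
  assumes IH: "IHP sc C l r (length (p@A@M@[u]@B))" and wf: "wfd (p@A@M@[u]@B)" and u: "u \<notin> set M"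
  shows "Pv l r p (A@M@[u]@B) - Pv l r p (A@[u]@M@B) \<in> Spn sc C (\<lambda>j. Om l r ^ j) (length (p@A@M@[u]@B) div 2)"
proof -
  interpret sw: sl2pair sc C r l kr kl by (rule sl2pair_swap[OF sl2pair_axioms])
  have e: "length (A@M@[u]@B@p) = length (p@A@M@[u]@B)" by simp
  have "Pv r l (A@M@[u]@B) p - Pv r l (A@[u]@M@B) p \<in> Spn sc C (\<lambda>j. Om r l ^ j) (length (A@M@[u]@B@p) div 2)"
  proof (rule sw.move)
    show "IHP sc C r l (length (A@M@[u]@B@p))" unfolding e IHP_sym by (rule IH)
    show "wfd (A@M@[u]@B@p)" using wf wfd_swap[of p "A@M@[u]@B"] by simp
    show "u \<notin> set M" by (rule u)
  qed
  then show ?thesis unfolding Pv_sym Om_sym e .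
qed


lemma Pv_Nil: "Pv l r [] [] = 1" by (simp add: Pv_def)

lemma wfd_sub: "wfd w \<Longrightarrow> (\<And>t. t \<in> set w' \<Longrightarrow> count_list w' t = count_list w t) \<Longrightarrow> wfd w'"
  unfolding wfd_def by (metis count_in)

lemma g1_step:
  assumes IH: "IHP sc C l r L" and wf: "wfd (p@q)" and len: "length (p@q) = L"
  shows "Pv l r p q \<in> Spn sc C (\<lambda>j. Om l r ^ j) (L div 2 + 1)"
proof -
  interpret sw: sl2pair sc C r l kr kl by (rule sl2pair_swap[OF sl2pair_axioms])
  let ?S = "\<lambda>m. Spn sc C (\<lambda>j. Om l r ^ j) m"
  show ?thesis
  proof (cases p)
    case Nil
    show ?thesis
    proof (cases q)
      case Nil
      have "(\<lambda>j. Om l r ^ j) 0 \<in> Spn sc C (\<lambda>j. Om l r ^ j) (L div 2 + 1)" by (rule Spn.gen) simp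
      then show ?thesis using \<open>p = []\<close> Nil by (simp add: Pv_Nil)
    next
      case (Cons u q')
      have "count_list q u = 2" using wf Cons \<open>p = []\<close> by (simp add: wfd_def)
      then have "u \<in> set q'" using Cons by (auto simp: count_in)
      then obtain A B where q': "q' = A @ u # B" and uA: "u \<notin> set A" by (meson split_list_first)
      have cu: "count_list (A@B) u = 0" using \<open>count_list q u = 2\<close> Cons q' by simp
      have d: "Pv l r [] ([u]@A@[u]@B) - Pv l r [] ([u]@[u]@A@B) \<in> ?S (length ([]@[u]@A@[u]@B) div 2)"
        using IH wf len Nil Cons q' uA by (intro move_q) auto
      have a: "Pv l r [] (u#u#(A@B)) = C * Pv l r [] (A@B)"
        using sw.arch[of u "A@B" "[]"] cu by (simp add: Pv_sym count_in)
      have wf': "wfd ([]@(A@B))"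
        using wf Nil Cons q' cu by (intro wfd_sub[OF wf]) (auto simp: count_in)
      have "Pv l r [] (A@B) \<in> ?S (length ([]@(A@B)) div 2 + 1)"
        using IHP_use[OF IH _ wf'] len Nil Cons q' by simp
      then have "C * Pv l r [] (A@B) \<in> ?S (L div 2 + 1)"
        using len Nil Cons q' by (auto intro!: Spn.cmul elim!: Spn_mono)
      moreover have "Pv l r [] ([u]@A@[u]@B) - Pv l r [] ([u]@[u]@A@B) \<in> ?S (L div 2 + 1)"
        using d len Nil Cons q' by (auto elim!: Spn_mono)
      ultimately have "(Pv l r [] ([u]@A@[u]@B) - Pv l r [] ([u]@[u]@A@B)) + C * Pv l r [] (A@B) \<in> ?S (L div 2 + 1)"
        by (metis Spn.add add.commute)
      then show ?thesis using a Nil Cons q' by simp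
    qed
  next
    case (Cons u p')
    show ?thesis
    proof (cases "u \<in> set p'")
      case True
      then obtain A B where p': "p' = A @ u # B" and uA: "u \<notin> set A" by (meson split_list_first)
      have c2: "count_list (p@q) u = 2" using wf Cons by (simp add: wfd_def)
      have cu: "count_list (A@B) u = 0" "count_list q u = 0" using c2 Cons p' by simp_all
      have d: "Pv l r ([u]@A@[u]@B) q - Pv l r ([u]@[u]@A@B) q \<in> ?S (length ([u]@A@[u]@B@q) div 2)"
        using IH wf len Cons p' uA by (intro move) auto
      have a: "Pv l r (u#u#(A@B)) q = C * Pv l r (A@B) q"
        using cu by (intro arch) (simp_all add: count_in)
      have wf': "wfd ((A@B)@q)"
        using cu Cons p' by (intro wfd_sub[OF wf]) (auto simp: count_in)
      have "Pv l r (A@B) q \<in> ?S (length ((A@B)@q) div 2 + 1)"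
        using IHP_use[OF IH _ wf'] len Cons p' by simp
      then have "C * Pv l r (A@B) q \<in> ?S (L div 2 + 1)"
        using len Cons p' by (auto intro!: Spn.cmul elim!: Spn_mono)
      moreover have "Pv l r ([u]@A@[u]@B) q - Pv l r ([u]@[u]@A@B) q \<in> ?S (L div 2 + 1)"
        using d len Cons p' by (auto elim!: Spn_mono)
      ultimately have "(Pv l r ([u]@A@[u]@B) q - Pv l r ([u]@[u]@A@B) q) + C * Pv l r (A@B) q \<in> ?S (L div 2 + 1)"
        by (metis Spn.add add.commute)
      then show ?thesis using a Cons p' by simp
    next
      case False
      have c2: "count_list (p@q) u = 2" using wf Cons by (simp add: wfd_def)
      then have cq: "count_list q u = 1" using False Cons by (simp add: count_in)
      then have "u \<in> set q" by (simp add: count_in)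
      then obtain A B where q: "q = A @ u # B" and uA: "u \<notin> set A" by (meson split_list_first)
      have cu: "count_list (A@B) u = 0" using cq q by simp
      have d: "Pv l r (u#p') ([]@A@[u]@B) - Pv l r (u#p') ([]@[u]@A@B) \<in> ?S (length ((u#p')@[]@A@[u]@B) div 2)"
        using IH wf len Cons q uA by (intro move_q) auto
      have b: "Pv l r (u#p') (u#(A@B)) = Om l r * Pv l r p' (A@B)"
        using cu False by (intro br) (simp_all add: count_in)
      have wf': "wfd (p'@(A@B))"
        using cu Cons q False by (intro wfd_sub[OF wf]) (auto simp: count_in)
      have "Pv l r p' (A@B) \<in> ?S (length (p'@(A@B)) div 2 + 1)"
        using IHP_use[OF IH _ wf'] len Cons q by simp
      then have "Om l r * Pv l r p' (A@B) \<in> ?S (Suc (length (p'@(A@B)) div 2 + 1))"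
        by (rule Spn_Om)
      then have "Om l r * Pv l r p' (A@B) \<in> ?S (L div 2 + 1)"
        using len Cons q by (auto elim!: Spn_mono)
      moreover have "Pv l r (u#p') ([]@A@[u]@B) - Pv l r (u#p') ([]@[u]@A@B) \<in> ?S (L div 2 + 1)"
        using d len Cons q by (auto elim!: Spn_mono)
      ultimately have "(Pv l r (u#p') ([]@A@[u]@B) - Pv l r (u#p') ([]@[u]@A@B)) + Om l r * Pv l r p' (A@B) \<in> ?S (L div 2 + 1)"
        by (metis Spn.add add.commute)
      then show ?thesis using b Cons q by simp
    qed
  qed
qed

lemma IHP_all: "IHP sc C l r L"
proof (induction L)
  case 0 then show ?case by (simp add: IHP_def)
next
  case (Suc L)
  show ?case unfolding IHP_def
  proof (intro allI impI)
    fix p q assume "length (p@q) < Suc L" "wfd (p@q)"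
    then consider "length (p@q) < L" | "length (p@q) = L" by linarith
    then show "Pv l r p q \<in> Spn sc C (\<lambda>j. Om l r ^ j) (length (p@q) div 2 + 1)"
    proof cases
      case 1 then show ?thesis using Suc \<open>wfd (p@q)\<close> by (simp add: IHP_def)
    next
      case 2 then show ?thesis using g1_step[OF Suc \<open>wfd (p@q)\<close>] by simp
    qed
  qed
qed

lemma monic:
  assumes "wfd (p@q)" "\<forall>t. count_list p t \<le> 1" "\<forall>t. count_list q t \<le> 1"
  shows "Pv l r p q - Om l r ^ (length (p@q) div 2) \<in> Spn sc C (\<lambda>j. Om l r ^ j) (length (p@q) div 2)"
  using assms
proof (induction p arbitrary: q)
  case Nil
  have "q = []"
  proof (rule ccontr)
    assume "q \<noteq> []"
    then have t: "hd q \<in> set q" by (rule hd_in_set)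
    then have "count_list q (hd q) = 2" using Nil.prems(1) by (simp add: wfd_def)
    moreover have "count_list q (hd q) \<le> 1" using Nil.prems(3) by blast
    ultimately show False by simp
  qed
  then show ?case by (simp add: Pv_Nil Spn.zero)
next
  case (Cons u p')
  let ?S = "\<lambda>m. Spn sc C (\<lambda>j. Om l r ^ j) m"
  have "count_list (u#p') u \<le> 1" using Cons.prems(2) by blast
  then have up: "u \<notin> set p'" by (simp add: count_in)
  have c2: "count_list ((u#p')@q) u = 2" using Cons.prems(1) by (simp add: wfd_def)
  then have cq: "count_list q u = 1" using up by (simp add: count_in)
  then have "u \<in> set q" by (simp add: count_in)
  then obtain A B where q: "q = A @ u # B" and uA: "u \<notin> set A" by (meson split_list_first)
  have cu: "count_list (A@B) u = 0" using cq q by simp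
  have d: "Pv l r (u#p') ([]@A@[u]@B) - Pv l r (u#p') ([]@[u]@A@B) \<in> ?S (length ((u#p')@[]@A@[u]@B) div 2)"
    using IHP_all Cons.prems q uA by (intro move_q) auto
  have b: "Pv l r (u#p') (u#(A@B)) = Om l r * Pv l r p' (A@B)"
    using cu up by (intro br) (simp_all add: count_in)
  have wf': "wfd (p'@(A@B))"
    using cu q up by (intro wfd_sub[OF Cons.prems(1)]) (auto simp: count_in)
  have "Pv l r p' (A@B) - Om l r ^ (length (p'@(A@B)) div 2) \<in> ?S (length (p'@(A@B)) div 2)"
  proof (rule Cons.IH)
    show "wfd (p'@(A@B))" by (rule wf')
    show "\<forall>t. count_list p' t \<le> 1" using Cons.prems(2) by (metis count_list.simps(2) le_trans le_add2 add.commute)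
    show "\<forall>t. count_list (A@B) t \<le> 1" using Cons.prems(3) q by (metis count_list_append count_list.simps(2) le_trans le_add1 le_add2 add.assoc)
  qed
  then have "Om l r * (Pv l r p' (A@B) - Om l r ^ (length (p'@(A@B)) div 2)) \<in> ?S (Suc (length (p'@(A@B)) div 2))"
    by (rule Spn_Om)
  moreover have "length ((u#p')@q) div 2 = Suc (length (p'@(A@B)) div 2)" using q by simp
  ultimately have m: "Om l r * Pv l r p' (A@B) - Om l r ^ (length ((u#p')@q) div 2) \<in> ?S (length ((u#p')@q) div 2)"
    by (simp add: right_diff_distrib)
  have d': "Pv l r (u#p') q - Pv l r (u#p') (u#(A@B)) \<in> ?S (length ((u#p')@q) div 2)"
    using d q by simp
  have "(Pv l r (u#p') q - Pv l r (u#p') (u#(A@B))) + (Om l r * Pv l r p' (A@B) - Om l r ^ (length ((u#p')@q) div 2))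
     \<in> ?S (length ((u#p')@q) div 2)" using d' m by (rule Spn.add)
  then show ?case using b by simp
qed


lemma Spn_sub_gen:
  assumes "\<And>j. j < m \<Longrightarrow> H j \<in> Spn sc C G m"
  shows "x \<in> Spn sc C H m \<Longrightarrow> x \<in> Spn sc C G m"
  by (induction rule: Spn.induct) (auto intro: Spn.intros assms)

lemma Om_pow_in:
  assumes "\<And>j. G j - Om l r ^ j \<in> Spn sc C (\<lambda>j. Om l r ^ j) j"
  shows "Om l r ^ j \<in> Spn sc C G (Suc j)"
proof (induction j rule: less_induct)
  case (less j)
  have "G j - Om l r ^ j \<in> Spn sc C G j"
  proof (rule Spn_sub_gen[OF _ assms])
    fix i assume "i < j"
    then show "Om l r ^ i \<in> Spn sc C G j" using less[OF \<open>i < j\<close>] by (auto elim: Spn_mono)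
  qed
  then have "G j - Om l r ^ j \<in> Spn sc C G (Suc j)" by (auto elim: Spn_mono)
  moreover have "G j \<in> Spn sc C G (Suc j)" by (rule Spn.gen) simp
  ultimately have "G j - (G j - Om l r ^ j) \<in> Spn sc C G (Suc j)" by (rule Spn_diff[rotated])
  then show ?case by simp
qed

lemma Spn_Om_sub:
  assumes "\<And>j. G j - Om l r ^ j \<in> Spn sc C (\<lambda>j. Om l r ^ j) j"
    and x: "x \<in> Spn sc C (\<lambda>j. Om l r ^ j) m"
  shows "x \<in> Spn sc C G m"
proof (rule Spn_sub_gen[OF _ x])
  fix j assume "j < m"
  show "Om l r ^ j \<in> Spn sc C G m"
    by (rule Spn_mono[OF Om_pow_in[OF assms(1)]]) (use \<open>j < m\<close> in simp)
qed

definition pe :: "complex poly \<Rightarrow> 'a" where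
  "pe p = (\<Sum>i\<le>degree p. sc (coeff p i) * C ^ i)"

lemma pe_alt: "degree p \<le> N \<Longrightarrow> pe p = (\<Sum>i\<le>N. sc (coeff p i) * C ^ i)"
  unfolding pe_def
  by (rule sum.mono_neutral_left) (auto simp: coeff_eq_0)

lemma pe_add: "pe (p + q) = pe p + pe q"
proof -
  let ?N = "max (degree p) (degree q)"
  have "pe (p + q) = (\<Sum>i\<le>?N. sc (coeff (p+q) i) * C ^ i)"
    by (rule pe_alt) (simp add: degree_add_le)
  also have "\<dots> = (\<Sum>i\<le>?N. sc (coeff p i) * C ^ i) + (\<Sum>i\<le>?N. sc (coeff q i) * C ^ i)"
    by (simp add: sc_add distrib_right sum.distrib)
  also have "\<dots> = pe p + pe q"
    using pe_alt[of p ?N] pe_alt[of q ?N] by simp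
  finally show ?thesis .
qed

lemma pe_smult: "pe (smult z p) = sc z * pe p"
proof -
  have "pe (smult z p) = (\<Sum>i\<le>degree p. sc (coeff (smult z p) i) * C ^ i)"
    by (rule pe_alt) (simp add: degree_smult_le)
  then show ?thesis by (simp add: pe_def sum_distrib_left sc_mult mult.assoc)
qed

lemma pe_X: "pe (pCons 0 p) = C * pe p"
proof -
  have "pe (pCons 0 p) = (\<Sum>i\<le>Suc (degree p). sc (coeff (pCons 0 p) i) * C ^ i)"
    by (rule pe_alt) (simp add: degree_pCons_le)
  also have "\<dots> = (\<Sum>i\<le>degree p. sc (coeff p i) * C ^ Suc i)"
    by (subst sum.atMost_Suc_shift) simp
  also have "\<dots> = C * pe p"
    unfolding pe_def sum_distrib_left
    by (rule sum.cong[OF refl]) (simp add: sc_left_comm mult.assoc flip: sc_comm)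
  finally show ?thesis .
qed

lemma pe_0: "pe 0 = 0" by (simp add: pe_def)
lemma pe_1: "pe 1 = 1" by (simp add: pe_def)

lemma Spn_extract:
  "x \<in> Spn sc C G m \<Longrightarrow> \<exists>b. x = (\<Sum>k<m. pe (b k) * G k)"
proof (induction rule: Spn.induct)
  case zero
  show ?case by (rule exI[of _ "\<lambda>_. 0"]) (simp add: pe_0)
next
  case (add x y)
  then obtain b1 b2 where "x = (\<Sum>k<m. pe (b1 k) * G k)" "y = (\<Sum>k<m. pe (b2 k) * G k)" by blast
  then show ?case by (intro exI[of _ "\<lambda>k. b1 k + b2 k"]) (simp add: pe_add distrib_right sum.distrib)
next
  case (scal x z)
  then obtain b where "x = (\<Sum>k<m. pe (b k) * G k)" by blast
  then show ?case by (intro exI[of _ "\<lambda>k. smult z (b k)"]) (simp add: pe_smult sum_distrib_left mult.assoc)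
next
  case (cmul x)
  then obtain b where "x = (\<Sum>k<m. pe (b k) * G k)" by blast
  then show ?case by (intro exI[of _ "\<lambda>k. pCons 0 (b k)"]) (simp add: pe_X sum_distrib_left mult.assoc)
next
  case (gen j)
  show ?case
  proof (intro exI[of _ "\<lambda>k. if k = j then 1 else 0"])
    have "(\<Sum>k<m. pe (if k = j then 1 else 0) * G k) = (\<Sum>k<m. if k = j then G k else 0)"
      by (rule sum.cong[OF refl]) (simp add: pe_0 pe_1)
    then show "G j = (\<Sum>k<m. pe (if k = j then 1 else 0) * G k)" using gen by simp
  qed
qed

end


type_synonym V = "nat \<Rightarrow> nat \<Rightarrow> nat \<Rightarrow> complex"

definition vadd :: "V \<Rightarrow> V \<Rightarrow> V" where "vadd X Y = (\<lambda>n i j. X n i j + Y n i j)"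
definition smul :: "complex \<Rightarrow> V \<Rightarrow> V" where "smul z X = (\<lambda>n i j. z * X n i j)"

definition lin :: "(V \<Rightarrow> V) \<Rightarrow> bool" where
  "lin f = ((\<forall>X Y. f (vadd X Y) = vadd (f X) (f Y)) \<and> (\<forall>z X. f (smul z X) = smul z (f X)))"

typedef lop = "{f :: V \<Rightarrow> V. lin f}" morphisms app Lop
  by (rule exI[of _ id]) (simp add: lin_def)

lemma lin_app: "lin (app f)" using app by simp
lemma app_Lop: "lin F \<Longrightarrow> app (Lop F) = F" by (simp add: Lop_inverse)
lemma lop_eq: "(\<And>X. app f X = app g X) \<Longrightarrow> f = g" by (metis app_inject ext)

lemma app_vadd: "app f (vadd X Y) = vadd (app f X) (app f Y)" using lin_app[of f] by (simp add: lin_def)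
lemma app_smul: "app f (smul z X) = smul z (app f X)" using lin_app[of f] by (simp add: lin_def)

lemma lin_zero: "lin (\<lambda>X n i j. 0)" by (simp add: lin_def vadd_def smul_def)
lemma lin_id: "lin id" by (simp add: lin_def)
lemma lin_plus: "lin (\<lambda>X. vadd (app f X) (app g X))"
  by (simp add: lin_def app_vadd app_smul) (simp add: vadd_def smul_def fun_eq_iff algebra_simps)
lemma lin_neg: "lin (\<lambda>X n i j. - app f X n i j)"
  by (simp add: lin_def app_vadd app_smul) (simp add: vadd_def smul_def fun_eq_iff algebra_simps)
lemma lin_minus: "lin (\<lambda>X n i j. app f X n i j - app g X n i j)"
  by (simp add: lin_def app_vadd app_smul) (simp add: vadd_def smul_def fun_eq_iff algebra_simps)
lemma lin_comp: "lin (\<lambda>X. app f (app g X))"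
  by (simp add: lin_def app_vadd app_smul)

instantiation lop :: ring_1
begin
definition "0 = Lop (\<lambda>X n i j. 0)"
definition "1 = Lop id"
definition "f + g = Lop (\<lambda>X. vadd (app f X) (app g X))"
definition "- f = Lop (\<lambda>X n i j. - app f X n i j)"
definition "f - g = Lop (\<lambda>X n i j. app f X n i j - app g X n i j)"
definition "f * g = Lop (\<lambda>X. app f (app g X))"

lemma app_zero[simp]: "app 0 X = (\<lambda>n i j. 0)" by (simp add: zero_lop_def app_Lop lin_zero)
lemma app_one[simp]: "app 1 X = X" by (simp add: one_lop_def app_Lop lin_id)
lemma app_plus[simp]: "app (f + g) X = vadd (app f X) (app g X)" by (simp add: plus_lop_def app_Lop lin_plus)
lemma app_uminus[simp]: "app (- f) X = (\<lambda>n i j. - app f X n i j)" by (simp add: uminus_lop_def app_Lop lin_neg)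
lemma app_minus[simp]: "app (f - g) X = (\<lambda>n i j. app f X n i j - app g X n i j)" by (simp add: minus_lop_def app_Lop lin_minus)
lemma app_times[simp]: "app (f * g) X = app f (app g X)" by (simp add: times_lop_def app_Lop lin_comp)

instance
proof
  fix a b c :: lop
  show "a * b * c = a * (b * c)" by (rule lop_eq) simp
  show "1 * a = a" by (rule lop_eq) simp
  show "a * 1 = a" by (rule lop_eq) simp
  show "a + b + c = a + (b + c)" by (rule lop_eq) (simp add: vadd_def add.assoc)
  show "a + b = b + a" by (rule lop_eq) (simp add: vadd_def add.commute)
  show "0 + a = a" by (rule lop_eq) (simp add: vadd_def)
  show "- a + a = 0" by (rule lop_eq) (simp add: vadd_def)
  show "a - b = a + - b" by (rule lop_eq) (simp add: vadd_def)
  show "(a + b) * c = a * c + b * c" by (rule lop_eq) simp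
  show "a * (b + c) = a * b + a * c" by (rule lop_eq) (simp add: app_vadd)
  show "(0::lop) \<noteq> 1"
  proof
    assume "(0::lop) = 1"
    then have "app 0 (\<lambda>n i j. 1) = app 1 (\<lambda>n i j. 1)" by simp
    then show False by (simp add: fun_eq_iff)
  qed
qed
end

lemma app_sum: "app (sum f I) X = (\<lambda>n i j. \<Sum>x\<in>I. app (f x) X n i j)"
  by (induction I rule: infinite_finite_induct) (auto simp: vadd_def)

definition scl :: "complex \<Rightarrow> lop" where "scl z = Lop (smul z)"
lemma lin_smul: "lin (smul z)" by (simp add: lin_def smul_def vadd_def fun_eq_iff algebra_simps)
lemma app_scl[simp]: "app (scl z) X = smul z X" by (simp add: scl_def app_Lop lin_smul)

definition mmN :: "V \<Rightarrow> V \<Rightarrow> V" where "mmN M N = (\<lambda>n i j. \<Sum>k\<le>n. M n i k * N n k j)"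

definition Lfun :: "V \<Rightarrow> V \<Rightarrow> V" where
  "Lfun M Y = (\<lambda>n i j. if i \<le> n \<and> j \<le> n then \<Sum>k\<le>n. M n i k * Y n k j else 0)"
definition Rfun :: "V \<Rightarrow> V \<Rightarrow> V" where
  "Rfun M Y = (\<lambda>n i j. if i \<le> n \<and> j \<le> n then \<Sum>k\<le>n. Y n i k * M n k j else 0)"

lemma lin_Lfun: "lin (Lfun M)"
  by (simp add: lin_def Lfun_def vadd_def smul_def fun_eq_iff algebra_simps sum.distrib sum_distrib_left)
lemma lin_Rfun: "lin (Rfun M)"
  by (simp add: lin_def Rfun_def vadd_def smul_def fun_eq_iff algebra_simps sum.distrib sum_distrib_left)

definition Lm :: "V \<Rightarrow> lop" where "Lm M = Lop (Lfun M)"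
definition Rm :: "V \<Rightarrow> lop" where "Rm M = Lop (Rfun M)"

lemma app_Lm: "app (Lm M) Y = Lfun M Y" by (simp add: Lm_def app_Lop lin_Lfun)
lemma app_Rm: "app (Rm M) Y = Rfun M Y" by (simp add: Rm_def app_Lop lin_Rfun)

lemma Lm_mult: "Lm M * Lm N = Lm (mmN M N)"
proof (rule lop_eq)
  fix Y
  show "app (Lm M * Lm N) Y = app (Lm (mmN M N)) Y"
    unfolding app_times app_Lm Lfun_def mmN_def
    by (auto simp: fun_eq_iff sum_distrib_left sum_distrib_right mult.assoc intro: sum.swap)
qed

lemma Rm_mult: "Rm M * Rm N = Rm (mmN N M)"
proof (rule lop_eq)
  fix Y
  show "app (Rm M * Rm N) Y = app (Rm (mmN N M)) Y"
    unfolding app_times app_Rm Rfun_def mmN_def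
    by (auto simp: fun_eq_iff sum_distrib_left sum_distrib_right mult.assoc intro: sum.swap)
qed

lemma Lm_Rm: "Lm M * Rm N = Rm N * Lm M"
proof (rule lop_eq)
  fix Y
  show "app (Lm M * Rm N) Y = app (Rm N * Lm M) Y"
    unfolding app_times app_Rm app_Lm Rfun_def Lfun_def
    by (auto simp: fun_eq_iff sum_distrib_left sum_distrib_right mult.assoc intro: sum.swap)
qed

lemma Lm_cong: "(\<And>n i j. i \<le> n \<Longrightarrow> j \<le> n \<Longrightarrow> M n i j = N n i j) \<Longrightarrow> Lm M = Lm N"
  unfolding Lm_def Lfun_def by (rule arg_cong[where f = Lop]) (auto simp: fun_eq_iff intro!: sum.cong)

lemma Rm_cong: "(\<And>n i j. i \<le> n \<Longrightarrow> j \<le> n \<Longrightarrow> M n i j = N n i j) \<Longrightarrow> Rm M = Rm N"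
  unfolding Rm_def Rfun_def by (rule arg_cong[where f = Lop]) (auto simp: fun_eq_iff intro!: sum.cong)

lemma Lm_add: "Lm M + Lm N = Lm (\<lambda>n i j. M n i j + N n i j)"
  by (rule lop_eq) (simp add: app_Lm Lfun_def vadd_def fun_eq_iff algebra_simps sum.distrib)
lemma Rm_add: "Rm M + Rm N = Rm (\<lambda>n i j. M n i j + N n i j)"
  by (rule lop_eq) (simp add: app_Rm Rfun_def vadd_def fun_eq_iff algebra_simps sum.distrib)
lemma Lm_scl: "scl z * Lm M = Lm (\<lambda>n i j. z * M n i j)"
  by (rule lop_eq) (simp add: app_Lm Lfun_def smul_def fun_eq_iff algebra_simps sum_distrib_left)
lemma Rm_scl: "scl z * Rm M = Rm (\<lambda>n i j. z * M n i j)"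
  by (rule lop_eq) (simp add: app_Rm Rfun_def smul_def fun_eq_iff algebra_simps sum_distrib_left)
lemma Lm_zero: "Lm (\<lambda>n i j. 0) = 0"
  by (rule lop_eq) (simp add: app_Lm Lfun_def fun_eq_iff)
lemma Rm_zero: "Rm (\<lambda>n i j. 0) = 0"
  by (rule lop_eq) (simp add: app_Rm Rfun_def fun_eq_iff)
lemma Lm_sum: "(\<Sum>c\<in>I. Lm (M c)) = Lm (\<lambda>n i j. \<Sum>c\<in>I. M c n i j)"
  by (induction I rule: infinite_finite_induct) (simp_all add: Lm_zero Lm_add)
lemma Rm_sum: "(\<Sum>c\<in>I. Rm (M c)) = Rm (\<lambda>n i j. \<Sum>c\<in>I. M c n i j)"
  by (induction I rule: infinite_finite_induct) (simp_all add: Rm_zero Rm_add)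


lemma sum_single:
  fixes n c :: nat
  assumes "\<And>k. k \<le> n \<Longrightarrow> k \<noteq> c \<Longrightarrow> F k = 0"
  shows "(\<Sum>k\<le>n. F k) = (if c \<le> n then F c else (0::complex))"
proof (cases "c \<le> n")
  case True
  have "(\<Sum>k\<le>n. F k) = F c + (\<Sum>k\<in>{..n} - {c}. F k)"
    using True by (intro sum.remove) auto
  also have "(\<Sum>k\<in>{..n} - {c}. F k) = 0" using assms by (intro sum.neutral) auto
  finally show ?thesis using True by simp
next
  case False then show ?thesis using assms by (auto intro!: sum.neutral)
qed

lemma EF: "i \<le> n \<Longrightarrow> m \<le> n \<Longrightarrow> (\<Sum>k\<le>n. e_mat n i k * f_mat n k m) =
    (if i = m \<and> i < n then of_nat (Suc i * (n - i)) else 0)"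
  by (subst sum_single[where c = "Suc i"]) (auto simp: e_mat_def f_mat_def)

lemma FE: "i \<le> n \<Longrightarrow> m \<le> n \<Longrightarrow> (\<Sum>k\<le>n. f_mat n i k * e_mat n k m) =
    (if i = m then of_nat (i * (Suc n - i)) else 0)"
proof (cases i)
  case 0 then show ?thesis by (simp add: f_mat_def)
next
  case (Suc i') 
  assume "i \<le> n" "m \<le> n"
  then show ?thesis using Suc
    by (subst sum_single[where c = i']) (auto simp: e_mat_def f_mat_def)
qed

lemma EH: "i \<le> n \<Longrightarrow> m \<le> n \<Longrightarrow> (\<Sum>k\<le>n. e_mat n i k * h_mat n k m) = e_mat n i m * of_int (int n - 2 * int m)"
  by (subst sum_single[where c = m]) (auto simp: e_mat_def h_mat_def)
lemma HE: "i \<le> n \<Longrightarrow> m \<le> n \<Longrightarrow> (\<Sum>k\<le>n. h_mat n i k * e_mat n k m) = of_int (int n - 2 * int i) * e_mat n i m"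
  by (subst sum_single[where c = i]) (auto simp: e_mat_def h_mat_def)
lemma FH: "i \<le> n \<Longrightarrow> m \<le> n \<Longrightarrow> (\<Sum>k\<le>n. f_mat n i k * h_mat n k m) = f_mat n i m * of_int (int n - 2 * int m)"
  by (subst sum_single[where c = m]) (auto simp: f_mat_def h_mat_def)
lemma HF: "i \<le> n \<Longrightarrow> m \<le> n \<Longrightarrow> (\<Sum>k\<le>n. h_mat n i k * f_mat n k m) = of_int (int n - 2 * int i) * f_mat n i m"
  by (subst sum_single[where c = i]) (auto simp: f_mat_def h_mat_def)
lemma HH: "i \<le> n \<Longrightarrow> m \<le> n \<Longrightarrow> (\<Sum>k\<le>n. h_mat n i k * h_mat n k m) = (if i = m then (of_int (int n - 2 * int i))^2 else 0)"
  by (subst sum_single[where c = i]) (auto simp: h_mat_def power2_eq_square)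

lemma comm_EF: "i \<le> n \<Longrightarrow> m \<le> n \<Longrightarrow> (\<Sum>k\<le>n. e_mat n i k * f_mat n k m) = (\<Sum>k\<le>n. f_mat n i k * e_mat n k m) + h_mat n i m"
proof -
  assume a: "i \<le> n" "m \<le> n"
  have "(of_nat (Suc i * (n - i)) :: complex) = of_nat (i * (Suc n - i)) + of_int (int n - 2 * int i)" if lt: "i < n"
  proof -
    obtain d where d: "n = i + d" using le_Suc_ex[OF less_imp_le[OF lt]] by blast
    have "int (Suc i * (n - i)) = int (i * (Suc n - i)) + (int n - 2 * int i)"
      unfolding d by (simp add: algebra_simps)
    then show ?thesis by (metis of_int_add of_int_of_nat_eq)
  qed
  moreover have "(0::complex) = of_nat (n * (Suc n - n)) + of_int (int n - 2 * int n)" by simp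
  ultimately show ?thesis using a by (auto simp: EF FE h_mat_def)
qed

lemma comm_EH: "i \<le> n \<Longrightarrow> m \<le> n \<Longrightarrow> (\<Sum>k\<le>n. e_mat n i k * h_mat n k m) = (\<Sum>k\<le>n. h_mat n i k * e_mat n k m) - 2 * e_mat n i m"
  by (simp add: EH HE) (auto simp: e_mat_def algebra_simps)

lemma comm_FH: "i \<le> n \<Longrightarrow> m \<le> n \<Longrightarrow> (\<Sum>k\<le>n. f_mat n i k * h_mat n k m) = (\<Sum>k\<le>n. h_mat n i k * f_mat n k m) + 2 * f_mat n i m"
  by (simp add: FH HF) (auto simp: f_mat_def algebra_simps)

definition al :: "nat \<Rightarrow> complex" where "al a = (if a = 0 then 1/2 else if a = 1 then - \<i>/2 else 0)"
definition be :: "nat \<Rightarrow> complex" where "be a = (if a = 0 then 1/2 else if a = 1 then \<i>/2 else 0)"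
definition ga :: "nat \<Rightarrow> complex" where "ga a = (if a = 0 then 0 else if a = 1 then 0 else 1/2)"

lemma rho_alt: "rho n a i j = al a * e_mat n i j + be a * f_mat n i j + ga a * h_mat n i j"
  unfolding rho_def al_def be_def ga_def by (auto simp: field_simps)

lemma expand9:
  "(\<Sum>k\<le>n. (a1 * E i k + b1 * F i k + c1 * H i k) * (a2 * E k m + b2 * F k m + c2 * H k m)) =
    a1*a2*(\<Sum>k\<le>n. E i k * E k m) + a1*b2*(\<Sum>k\<le>n. E i k * F k m) + a1*c2*(\<Sum>k\<le>n. E i k * H k m)
  + b1*a2*(\<Sum>k\<le>n. F i k * E k m) + b1*b2*(\<Sum>k\<le>n. F i k * F k m) + b1*c2*(\<Sum>k\<le>n. F i k * H k m)
  + c1*a2*(\<Sum>k\<le>n. H i k * E k m) + c1*b2*(\<Sum>k\<le>n. H i k * F k m) + c1*c2*(\<Sum>k\<le>n. H i k * H k m)"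
  for E F H :: "nat \<Rightarrow> nat \<Rightarrow> complex"
  by (simp add: algebra_simps sum.distrib sum_distrib_left)

lemma mm_rho: "(\<Sum>k\<le>n. rho n a i k * rho n b k m) =
    al a*al b*(\<Sum>k\<le>n. e_mat n i k * e_mat n k m) + al a*be b*(\<Sum>k\<le>n. e_mat n i k * f_mat n k m) + al a*ga b*(\<Sum>k\<le>n. e_mat n i k * h_mat n k m)
  + be a*al b*(\<Sum>k\<le>n. f_mat n i k * e_mat n k m) + be a*be b*(\<Sum>k\<le>n. f_mat n i k * f_mat n k m) + be a*ga b*(\<Sum>k\<le>n. f_mat n i k * h_mat n k m)
  + ga a*al b*(\<Sum>k\<le>n. h_mat n i k * e_mat n k m) + ga a*be b*(\<Sum>k\<le>n. h_mat n i k * f_mat n k m) + ga a*ga b*(\<Sum>k\<le>n. h_mat n i k * h_mat n k m)"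
  unfolding rho_alt by (rule expand9)

lemma M1:
  assumes "a < 3" "b < 3" "i \<le> n" "m \<le> n"
  shows "(\<Sum>k\<le>n. rho n a i k * rho n b k m) = (\<Sum>k\<le>n. rho n b i k * rho n a k m)
          + \<i> * (\<Sum>c<3. eps a b c * rho n c i m)"
proof -
  note cs = comm_EF[OF assms(3,4)] comm_EH[OF assms(3,4)] comm_FH[OF assms(3,4)]
  show ?thesis
    unfolding mm_rho cs sum3
    using less3[OF assms(1)] less3[OF assms(2)]
    by (elim disjE) (simp_all add: al_def be_def ga_def eps_def rho_alt algebra_simps)
qed

definition cn :: "nat \<Rightarrow> complex" where "cn n = of_nat (n * (n + 2)) / 4"

lemma M2:
  assumes "i \<le> n" "m \<le> n"
  shows "(\<Sum>a<3. \<Sum>k\<le>n. rho n a i k * rho n a k m) = (if i = m then cn n else 0)"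
proof -
  have "(\<Sum>a<3. \<Sum>k\<le>n. rho n a i k * rho n a k m) =
     ((\<Sum>k\<le>n. e_mat n i k * f_mat n k m) + (\<Sum>k\<le>n. f_mat n i k * e_mat n k m)) / 2
     + (\<Sum>k\<le>n. h_mat n i k * h_mat n k m) / 4"
    unfolding sum3 mm_rho by (simp add: al_def be_def ga_def algebra_simps)
  also have "\<dots> = (if i = m then cn n else 0)"
  proof (cases "i = m")
    case True
    have "(of_nat (if i < n then Suc i * (n - i) else 0) + of_nat (i * (Suc n - i))) / 2 + (of_int (int n - 2 * int i))\<^sup>2 / 4
          = (cn n :: complex)"
    proof -
      obtain d where d: "n = i + d" using le_Suc_ex[OF assms(1)] by blast
      have "int (if i < n then Suc i * (n - i) else 0) = int (Suc i * (n - i))" by simp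
      then have "int (if i < n then Suc i * (n - i) else 0) + int (i * (Suc n - i)) = 2 * int i * (int n - int i) + int n"
        unfolding d by (simp add: algebra_simps)
      then have "2 * (of_int (int (if i < n then Suc i * (n - i) else 0) + int (i * (Suc n - i))) :: complex) + (of_int (int n - 2 * int i))\<^sup>2
            = of_int (int (n * (n + 2)))"
        by (simp only: , (simp add: power2_eq_square algebra_simps)?)
      then show ?thesis unfolding cn_def by (simp add: field_simps, (simp add: algebra_simps)?)
    qed
    then show ?thesis using True assms by (simp add: EF FE HH split: if_splits)
  next
    case False then show ?thesis using assms by (simp add: EF FE HH)
  qed
  finally show ?thesis .
qed


definition Dg :: V where "Dg = (\<lambda>n i j. if i = j then cn n else 0)"
definition lC :: lop where "lC = Lm Dg"
definition ll :: "nat \<Rightarrow> lop" where "ll a = Lm (\<lambda>n i j. rho n a i j)"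
definition rr :: "nat \<Rightarrow> lop" where "rr a = Rm (\<lambda>n i j. rho n a i j)"

lemma Rm_Dg: "Rm Dg = Lm Dg"
proof (rule lop_eq)
  fix Y
  show "app (Rm Dg) Y = app (Lm Dg) Y"
    unfolding app_Lm app_Rm Lfun_def Rfun_def Dg_def fun_eq_iff
  proof (intro allI)
    fix n i j
    show "(if i \<le> n \<and> j \<le> n then \<Sum>k\<le>n. Y n i k * (if k = j then cn n else 0) else 0) =
          (if i \<le> n \<and> j \<le> n then \<Sum>k\<le>n. (if i = k then cn n else 0) * Y n k j else 0)"
      by (auto simp: sum_single[where c = j] sum_single[where c = i])
  qed
qed

lemma Dg_left: "i \<le> n \<Longrightarrow> j \<le> n \<Longrightarrow> (\<Sum>k\<le>n. Dg n i k * M n k j) = cn n * M n i j"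
  by (subst sum_single[where c = i]) (auto simp: Dg_def)
lemma Dg_right: "i \<le> n \<Longrightarrow> j \<le> n \<Longrightarrow> (\<Sum>k\<le>n. M n i k * Dg n k j) = M n i j * cn n"
  by (subst sum_single[where c = j]) (auto simp: Dg_def)

interpretation conc: sl2pair scl lC ll rr \<i> "- \<i>"
proof
  fix x y z :: complex and w :: lop and a b :: nat
  show "scl (x + y) = scl x + scl y" by (rule lop_eq) (simp add: smul_def vadd_def fun_eq_iff algebra_simps)
  show "scl (x * y) = scl x * scl y" by (rule lop_eq) (simp add: smul_def fun_eq_iff algebra_simps)
  show "scl 1 = 1" by (rule lop_eq) (simp add: smul_def)
  show "scl z * w = w * scl z" by (rule lop_eq) (simp add: app_smul)
  show "a < 3 \<Longrightarrow> b < 3 \<Longrightarrow> ll a * rr b = rr b * ll a" by (simp add: ll_def rr_def Lm_Rm)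
  show "ll a * ll b = ll b * ll a + scl \<i> * (\<Sum>c<3. scl (eps a b c) * ll c)" if ab: "a < 3" "b < 3"
    unfolding ll_def Lm_mult Lm_scl Lm_sum Lm_add
  proof (rule Lm_cong)
    fix n i j :: nat assume "i \<le> n" "j \<le> n"
    from M1[OF ab this] show "mmN (\<lambda>n. rho n a) (\<lambda>n. rho n b) n i j =
        mmN (\<lambda>n. rho n b) (\<lambda>n. rho n a) n i j + \<i> * (\<Sum>c<3. eps a b c * rho n c i j)"
      by (simp only: mmN_def)
  qed
  show "rr a * rr b = rr b * rr a + scl (- \<i>) * (\<Sum>c<3. scl (eps a b c) * rr c)" if ab: "a < 3" "b < 3"
    unfolding rr_def Rm_mult Rm_scl Rm_sum Rm_add
  proof (rule Rm_cong)
    fix n i j :: nat assume "i \<le> n" "j \<le> n"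
    from M1[OF ab this] show "mmN (\<lambda>n. rho n b) (\<lambda>n. rho n a) n i j =
        mmN (\<lambda>n. rho n a) (\<lambda>n. rho n b) n i j + - \<i> * (\<Sum>c<3. eps a b c * rho n c i j)"
      unfolding mmN_def by (simp add: algebra_simps)
  qed
  show "(\<Sum>a<3. ll a * ll a) = lC"
    unfolding ll_def lC_def Lm_mult Lm_sum
  proof (rule Lm_cong)
    fix n i j :: nat assume "i \<le> n" "j \<le> n"
    from M2[OF this] show "(\<Sum>a<3. mmN (\<lambda>n. rho n a) (\<lambda>n. rho n a) n i j) = Dg n i j"
      unfolding mmN_def Dg_def by simp
  qed
  show "(\<Sum>a<3. rr a * rr a) = lC"
    unfolding rr_def lC_def Rm_mult Rm_sum Rm_Dg[symmetric]
  proof (rule Rm_cong)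
    fix n i j :: nat assume "i \<le> n" "j \<le> n"
    from M2[OF this] show "(\<Sum>a<3. mmN (\<lambda>n. rho n a) (\<lambda>n. rho n a) n i j) = Dg n i j"
      unfolding mmN_def Dg_def by simp
  qed
  show "a < 3 \<Longrightarrow> lC * ll a = ll a * lC"
    unfolding ll_def lC_def Lm_mult
  proof (rule Lm_cong)
    fix n i j :: nat assume "i \<le> n" "j \<le> n"
    then have h1: "(\<Sum>k\<le>n. Dg n i k * rho n a k j) = cn n * rho n a i j"
      and h2: "(\<Sum>k\<le>n. rho n a i k * Dg n k j) = rho n a i j * cn n"
      using Dg_left[of i n j "\<lambda>n. rho n a"] Dg_right[of i n j "\<lambda>n. rho n a"] by simp_all
    show "mmN Dg (\<lambda>n. rho n a) n i j = mmN (\<lambda>n. rho n a) Dg n i j"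
      unfolding mmN_def h1 h2 by (rule mult.commute)
  qed
  show "a < 3 \<Longrightarrow> lC * rr a = rr a * lC" by (simp add: lC_def rr_def Lm_Rm)
qed


lemma matprod_append:
  "i \<le> n \<Longrightarrow> matprod n (xs @ ys) i j = (\<Sum>k\<le>n. matprod n xs i k * matprod n ys k j)"
proof (induction xs arbitrary: i)
  case Nil
  show ?case by (subst sum_single[where c = i]) (use Nil in auto)
next
  case (Cons A xs)
  have "matprod n ((A # xs) @ ys) i j = (\<Sum>k\<le>n. A i k * (\<Sum>m\<le>n. matprod n xs k m * matprod n ys m j))"
    by (simp add: Cons.IH)
  also have "\<dots> = (\<Sum>m\<le>n. (\<Sum>k\<le>n. A i k * matprod n xs k m) * matprod n ys m j)"
    by (simp add: sum_distrib_left sum_distrib_right mult.assoc) (rule sum.swap)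
  finally show ?case by simp
qed

abbreviation Mp :: "nat \<Rightarrow> (nat \<Rightarrow> nat) \<Rightarrow> nat list \<Rightarrow> nat \<Rightarrow> nat \<Rightarrow> complex" where
  "Mp n \<phi> w \<equiv> matprod n (map (\<lambda>x. rho n (\<phi> x)) w)"

lemma Mp_single: "t \<le> n \<Longrightarrow> Mp n \<phi> [x] k t = rho n (\<phi> x) k t"
  by (simp, subst sum_single[where c = t]) auto

lemma app_lw_l: "i \<le> n \<Longrightarrow> t \<le> n \<Longrightarrow> app (lw ll \<phi> w) Y n i t = (\<Sum>k\<le>n. Mp n \<phi> w i k * Y n k t)"
proof (induction w arbitrary: i)
  case Nil
  show ?case by simp (subst sum_single[where c = i], use Nil in auto)
next
  case (Cons x w)
  have "app (lw ll \<phi> (x # w)) Y n i t = (\<Sum>k\<le>n. rho n (\<phi> x) i k * app (lw ll \<phi> w) Y n k t)"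
    using Cons.prems by (simp add: ll_def app_Lm Lfun_def)
  also have "\<dots> = (\<Sum>k\<le>n. rho n (\<phi> x) i k * (\<Sum>m\<le>n. Mp n \<phi> w k m * Y n m t))"
    using Cons by (intro sum.cong refl) simp
  also have "\<dots> = (\<Sum>m\<le>n. (\<Sum>k\<le>n. rho n (\<phi> x) i k * Mp n \<phi> w k m) * Y n m t)"
    by (simp add: sum_distrib_left sum_distrib_right mult.assoc) (rule sum.swap)
  finally show ?case by simp
qed

lemma app_lw_r: "i \<le> n \<Longrightarrow> t \<le> n \<Longrightarrow> app (lw rr \<phi> w) Y n i t = (\<Sum>k\<le>n. Y n i k * Mp n \<phi> (rev w) k t)"
proof (induction w arbitrary: t)
  case Nil
  show ?case by simp (subst sum_single[where c = t], use Nil in auto)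
next
  case (Cons x w)
  have "app (lw rr \<phi> (x # w)) Y n i t = (\<Sum>k\<le>n. app (lw rr \<phi> w) Y n i k * rho n (\<phi> x) k t)"
    using Cons.prems by (simp add: rr_def app_Rm Rfun_def)
  also have "\<dots> = (\<Sum>k\<le>n. (\<Sum>m\<le>n. Y n i m * Mp n \<phi> (rev w) m k) * rho n (\<phi> x) k t)"
    using Cons by (intro sum.cong refl) simp
  also have "\<dots> = (\<Sum>m\<le>n. Y n i m * (\<Sum>k\<le>n. Mp n \<phi> (rev w) m k * rho n (\<phi> x) k t))"
    by (simp add: sum_distrib_left sum_distrib_right mult.assoc) (rule sum.swap)
  also have "\<dots> = (\<Sum>m\<le>n. Y n i m * Mp n \<phi> (rev (x # w)) m t)"
  proof (intro sum.cong refl)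
    fix m assume "m \<in> {..n}"
    then have "Mp n \<phi> (rev w @ [x]) m t = (\<Sum>k\<le>n. Mp n \<phi> (rev w) m k * Mp n \<phi> [x] k t)"
      using matprod_append[of m n "map (\<lambda>x. rho n (\<phi> x)) (rev w)"] by simp
    also have "\<dots> = (\<Sum>k\<le>n. Mp n \<phi> (rev w) m k * rho n (\<phi> x) k t)"
      using Cons.prems by (intro sum.cong refl) (simp only: Mp_single)
    finally show "Y n i m * (\<Sum>k\<le>n. Mp n \<phi> (rev w) m k * rho n (\<phi> x) k t) = Y n i m * Mp n \<phi> (rev (x # w)) m t"
      by simp
  qed
  finally show ?case .
qed

lemma app_Pv: "i \<le> n \<Longrightarrow> t \<le> n \<Longrightarrow> app (Pv ll rr p (rev q)) Y n i t =
   (\<Sum>\<phi>\<in>set (p @ q) \<rightarrow>\<^sub>E {..<3}. \<Sum>k\<le>n. \<Sum>m\<le>n. Mp n \<phi> p i k * (Y n k m * Mp n \<phi> q m t))"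
proof -
  assume a: "i \<le> n" "t \<le> n"
  have S: "set (p @ rev q) = set (p @ q)" by auto
  show ?thesis
    unfolding Pv_def S app_sum
  proof (intro sum.cong refl)
    fix \<phi> :: "nat \<Rightarrow> nat"
    have "app (lw ll \<phi> p * lw rr \<phi> (rev q)) Y n i t = (\<Sum>k\<le>n. Mp n \<phi> p i k * app (lw rr \<phi> (rev q)) Y n k t)"
      using a by (simp add: app_lw_l)
    also have "\<dots> = (\<Sum>k\<le>n. \<Sum>m\<le>n. Mp n \<phi> p i k * (Y n k m * Mp n \<phi> q m t))"
      using a by (intro sum.cong refl) (simp add: app_lw_r sum_distrib_left)
    finally show "app (lw ll \<phi> p * lw rr \<phi> (rev q)) Y n i t = (\<Sum>k\<le>n. \<Sum>m\<le>n. Mp n \<phi> p i k * (Y n k m * Mp n \<phi> q m t))" .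
  qed
qed

lemma sum_PiE_plus:
  "(\<Sum>\<phi>\<in>(Inl ` A \<union> Inr ` B) \<rightarrow>\<^sub>E S. F \<phi>) = (\<Sum>\<phi>1\<in>A \<rightarrow>\<^sub>E S. \<Sum>\<phi>2\<in>B \<rightarrow>\<^sub>E S. F (case_sum \<phi>1 \<phi>2))"
proof -
  let ?h = "\<lambda>(\<phi>1, \<phi>2). case_sum \<phi>1 \<phi>2"
  have inj: "inj_on ?h ((A \<rightarrow>\<^sub>E S) \<times> (B \<rightarrow>\<^sub>E S))"
  proof (rule inj_onI)
    fix x y assume "x \<in> (A \<rightarrow>\<^sub>E S) \<times> (B \<rightarrow>\<^sub>E S)" "y \<in> (A \<rightarrow>\<^sub>E S) \<times> (B \<rightarrow>\<^sub>E S)" "?h x = ?h y"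
    then obtain a1 a2 b1 b2 where x: "x = (a1, a2)" and y: "y = (b1, b2)" and e: "case_sum a1 a2 = case_sum b1 b2"
      by (cases x, cases y) auto
    have "a1 = b1" proof fix t show "a1 t = b1 t" using fun_cong[OF e, of "Inl t"] by simp qed
    moreover have "a2 = b2" proof fix t show "a2 t = b2 t" using fun_cong[OF e, of "Inr t"] by simp qed
    ultimately show "x = y" using x y by simp
  qed
  have img: "?h ` ((A \<rightarrow>\<^sub>E S) \<times> (B \<rightarrow>\<^sub>E S)) = (Inl ` A \<union> Inr ` B) \<rightarrow>\<^sub>E S"
  proof
    show "?h ` ((A \<rightarrow>\<^sub>E S) \<times> (B \<rightarrow>\<^sub>E S)) \<subseteq> (Inl ` A \<union> Inr ` B) \<rightarrow>\<^sub>E S"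
    proof
      fix \<psi> assume "\<psi> \<in> ?h ` ((A \<rightarrow>\<^sub>E S) \<times> (B \<rightarrow>\<^sub>E S))"
      then obtain a1 a2 where a: "a1 \<in> A \<rightarrow>\<^sub>E S" "a2 \<in> B \<rightarrow>\<^sub>E S" and p: "\<psi> = case_sum a1 a2" by auto
      show "\<psi> \<in> (Inl ` A \<union> Inr ` B) \<rightarrow>\<^sub>E S"
        unfolding p using a by (auto simp: PiE_iff extensional_def split: sum.splits)
    qed
  next
    show "(Inl ` A \<union> Inr ` B) \<rightarrow>\<^sub>E S \<subseteq> ?h ` ((A \<rightarrow>\<^sub>E S) \<times> (B \<rightarrow>\<^sub>E S))"
    proof
      fix \<psi> assume ps: "\<psi> \<in> (Inl ` A \<union> Inr ` B) \<rightarrow>\<^sub>E S"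
      have "\<psi> \<circ> Inl \<in> A \<rightarrow>\<^sub>E S" "\<psi> \<circ> Inr \<in> B \<rightarrow>\<^sub>E S"
        using ps by (auto simp: PiE_iff extensional_def)
      moreover have "\<psi> = ?h (\<psi> \<circ> Inl, \<psi> \<circ> Inr)"
      proof fix t show "\<psi> t = ?h (\<psi> \<circ> Inl, \<psi> \<circ> Inr) t" by (cases t) auto qed
      ultimately show "\<psi> \<in> ?h ` ((A \<rightarrow>\<^sub>E S) \<times> (B \<rightarrow>\<^sub>E S))" by blast
    qed
  qed
  have "(\<Sum>\<phi>\<in>(Inl ` A \<union> Inr ` B) \<rightarrow>\<^sub>E S. F \<phi>) = (\<Sum>x\<in>(A \<rightarrow>\<^sub>E S) \<times> (B \<rightarrow>\<^sub>E S). F (?h x))"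
    by (rule sum.reindex_bij_betw[symmetric]) (simp add: bij_betw_def inj img)
  also have "\<dots> = (\<Sum>\<phi>1\<in>A \<rightarrow>\<^sub>E S. \<Sum>\<phi>2\<in>B \<rightarrow>\<^sub>E S. F (case_sum \<phi>1 \<phi>2))"
    by (simp add: sum.cartesian_product case_prod_beta)
  finally show ?thesis .
qed

definition Phi :: "nat \<Rightarrow> nat list \<Rightarrow> nat list \<Rightarrow> nat \<Rightarrow> nat \<Rightarrow> lop \<Rightarrow> complex" where
  "Phi n h1 h2 i j Z = (\<Sum>\<phi>2\<in>set (h1 @ h2) \<rightarrow>\<^sub>E {..<3}. \<Sum>t\<le>n.
      app Z (\<lambda>n' a b. Mp n' \<phi>2 h1 a b) n i t * Mp n \<phi>2 h2 t j)"

lemma three: "{0, 1, 2::nat} = {..<3}" by auto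

lemma wrep_join:
  assumes ij: "i \<le> n" "j \<le> n"
  shows "wrep n (join (p, q) (h1, h2)) i j = Phi n h1 h2 i j (Pv ll rr p (rev q))"
proof -
  have S: "set (join (p, q) (h1, h2)) = Inl ` set (p @ q) \<union> Inr ` set (h1 @ h2)"
    by (auto simp: join_def)
  have M: "matprod n (map (\<lambda>l. rho n (case_sum \<phi>1 \<phi>2 l)) (join (p, q) (h1, h2))) i j =
     (\<Sum>k\<le>n. \<Sum>m\<le>n. \<Sum>t\<le>n. Mp n \<phi>1 p i k * (Mp n \<phi>2 h1 k m * (Mp n \<phi>1 q m t * Mp n \<phi>2 h2 t j)))"
    for \<phi>1 \<phi>2
  proof -
    have e: "map (\<lambda>l. rho n (case_sum \<phi>1 \<phi>2 l)) (join (p, q) (h1, h2)) =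
       map (\<lambda>x. rho n (\<phi>1 x)) p @ map (\<lambda>x. rho n (\<phi>2 x)) h1 @ map (\<lambda>x. rho n (\<phi>1 x)) q @ map (\<lambda>x. rho n (\<phi>2 x)) h2"
      by (simp add: join_def)
    show ?thesis unfolding e
      using ij by (simp add: matprod_append sum_distrib_left)
  qed
  have "wrep n (join (p, q) (h1, h2)) i j = (\<Sum>\<phi>1\<in>set (p @ q) \<rightarrow>\<^sub>E {..<3}. \<Sum>\<phi>2\<in>set (h1 @ h2) \<rightarrow>\<^sub>E {..<3}.
      \<Sum>k\<le>n. \<Sum>m\<le>n. \<Sum>t\<le>n. Mp n \<phi>1 p i k * (Mp n \<phi>2 h1 k m * (Mp n \<phi>1 q m t * Mp n \<phi>2 h2 t j)))"
    unfolding wrep_def S three sum_PiE_plus M ..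
  also have "\<dots> = (\<Sum>\<phi>2\<in>set (h1 @ h2) \<rightarrow>\<^sub>E {..<3}. \<Sum>\<phi>1\<in>set (p @ q) \<rightarrow>\<^sub>E {..<3}.
      \<Sum>t\<le>n. \<Sum>k\<le>n. \<Sum>m\<le>n. Mp n \<phi>1 p i k * (Mp n \<phi>2 h1 k m * (Mp n \<phi>1 q m t * Mp n \<phi>2 h2 t j)))"
  proof -
    have "(\<Sum>k\<le>n. \<Sum>m\<le>n. \<Sum>t\<le>n. F k m t) = (\<Sum>t\<le>n. \<Sum>k\<le>n. \<Sum>m\<le>n. F k m t)" for F :: "nat \<Rightarrow> nat \<Rightarrow> nat \<Rightarrow> complex"
    proof -
      have "(\<Sum>k\<le>n. \<Sum>m\<le>n. \<Sum>t\<le>n. F k m t) = (\<Sum>k\<le>n. \<Sum>t\<le>n. \<Sum>m\<le>n. F k m t)"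
        by (rule sum.cong[OF refl], rule sum.swap)
      also have "\<dots> = (\<Sum>t\<le>n. \<Sum>k\<le>n. \<Sum>m\<le>n. F k m t)" by (rule sum.swap)
      finally show ?thesis .
    qed
    note sw3 = this
    have "(\<Sum>\<phi>1\<in>set (p @ q) \<rightarrow>\<^sub>E {..<3}. \<Sum>\<phi>2\<in>set (h1 @ h2) \<rightarrow>\<^sub>E {..<3}.
      \<Sum>k\<le>n. \<Sum>m\<le>n. \<Sum>t\<le>n. Mp n \<phi>1 p i k * (Mp n \<phi>2 h1 k m * (Mp n \<phi>1 q m t * Mp n \<phi>2 h2 t j)))
      = (\<Sum>\<phi>1\<in>set (p @ q) \<rightarrow>\<^sub>E {..<3}. \<Sum>\<phi>2\<in>set (h1 @ h2) \<rightarrow>\<^sub>E {..<3}.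
      \<Sum>t\<le>n. \<Sum>k\<le>n. \<Sum>m\<le>n. Mp n \<phi>1 p i k * (Mp n \<phi>2 h1 k m * (Mp n \<phi>1 q m t * Mp n \<phi>2 h2 t j)))"
      by (rule sum.cong[OF refl], rule sum.cong[OF refl], rule sw3)
    also have "\<dots> = (\<Sum>\<phi>2\<in>set (h1 @ h2) \<rightarrow>\<^sub>E {..<3}. \<Sum>\<phi>1\<in>set (p @ q) \<rightarrow>\<^sub>E {..<3}.
      \<Sum>t\<le>n. \<Sum>k\<le>n. \<Sum>m\<le>n. Mp n \<phi>1 p i k * (Mp n \<phi>2 h1 k m * (Mp n \<phi>1 q m t * Mp n \<phi>2 h2 t j)))"
      by (rule sum.swap)
    finally show ?thesis .
  qed
  also have "\<dots> = (\<Sum>\<phi>2\<in>set (h1 @ h2) \<rightarrow>\<^sub>E {..<3}. \<Sum>t\<le>n. \<Sum>\<phi>1\<in>set (p @ q) \<rightarrow>\<^sub>E {..<3}.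
      \<Sum>k\<le>n. \<Sum>m\<le>n. Mp n \<phi>1 p i k * (Mp n \<phi>2 h1 k m * (Mp n \<phi>1 q m t * Mp n \<phi>2 h2 t j)))"
    by (rule sum.cong[OF refl], rule sum.swap)
  also have "\<dots> = Phi n h1 h2 i j (Pv ll rr p (rev q))"
    unfolding Phi_def
  proof (rule sum.cong[OF refl], rule sum.cong[OF refl])
    fix \<phi>2 t assume t: "t \<in> {..n}"
    show "(\<Sum>\<phi>1\<in>set (p @ q) \<rightarrow>\<^sub>E {..<3}. \<Sum>k\<le>n. \<Sum>m\<le>n. Mp n \<phi>1 p i k * (Mp n \<phi>2 h1 k m * (Mp n \<phi>1 q m t * Mp n \<phi>2 h2 t j)))
       = app (Pv ll rr p (rev q)) (\<lambda>n' a b. Mp n' \<phi>2 h1 a b) n i t * Mp n \<phi>2 h2 t j"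
      using ij t by (simp add: app_Pv sum_distrib_right mult.assoc)
  qed
  finally show ?thesis .
qed


lemma Phi_add: "Phi n h1 h2 i j (Z1 + Z2) = Phi n h1 h2 i j Z1 + Phi n h1 h2 i j Z2"
  by (simp add: Phi_def vadd_def distrib_right sum.distrib)

lemma Phi_zero: "Phi n h1 h2 i j 0 = 0"
  by (simp add: Phi_def)

lemma Phi_scl: "Phi n h1 h2 i j (scl z * Z) = z * Phi n h1 h2 i j Z"
  by (simp add: Phi_def smul_def sum_distrib_left mult.assoc)

lemma Phi_C: assumes "i \<le> n" shows "Phi n h1 h2 i j (lC * Z) = cn n * Phi n h1 h2 i j Z"
proof -
  have "app (lC * Z) Y n i t = cn n * app Z Y n i t" if "t \<le> n" for Y t
    using assms that Dg_left[of i n t "app Z Y"] by (simp add: lC_def app_Lm Lfun_def)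
  then show ?thesis unfolding Phi_def
    by (simp add: sum_distrib_left mult.assoc)
qed

lemma Phi_Cpow: assumes "i \<le> n" shows "Phi n h1 h2 i j (lC ^ k * Z) = cn n ^ k * Phi n h1 h2 i j Z"
proof (induction k)
  case 0 then show ?case by simp
next
  case (Suc k)
  have "Phi n h1 h2 i j (lC ^ Suc k * Z) = Phi n h1 h2 i j (lC * (lC ^ k * Z))" by (simp add: mult.assoc)
  also have "\<dots> = cn n * Phi n h1 h2 i j (lC ^ k * Z)" by (rule Phi_C[OF assms])
  finally show ?case using Suc by simp
qed

lemma Phi_sum: "Phi n h1 h2 i j (\<Sum>k\<in>K. Z k) = (\<Sum>k\<in>K. Phi n h1 h2 i j (Z k))"
  by (induction K rule: infinite_finite_induct) (simp_all add: Phi_zero Phi_add)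

lemma Phi_pe: assumes "i \<le> n"
  shows "Phi n h1 h2 i j (conc.pe p * Z) = (\<Sum>k\<le>degree p. coeff p k * cn n ^ k * Phi n h1 h2 i j Z)"
  unfolding conc.pe_def sum_distrib_right Phi_sum
  by (rule sum.cong[OF refl]) (simp add: mult.assoc Phi_scl Phi_Cpow[OF assms])

lemma Pv_arches:
  assumes "\<forall>x\<in>set p \<union> set q. x < N"
  shows "Pv ll rr (p @ concat (map (\<lambda>t. [N + t, N + t]) [0..<k])) q = lC ^ k * Pv ll rr p q"
proof (induction k)
  case 0 then show ?case by simp
next
  case (Suc k)
  have u: "N + k \<notin> set (p @ concat (map (\<lambda>t. [N + t, N + t]) [0..<k]))" "N + k \<notin> set q"
    using assms by auto
  have "Pv ll rr (p @ concat (map (\<lambda>t. [N + t, N + t]) [0..<Suc k])) q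
      = Pv ll rr ((p @ concat (map (\<lambda>t. [N + t, N + t]) [0..<k])) @ [N + k, N + k]) q" by simp
  also have "\<dots> = lC * Pv ll rr (p @ concat (map (\<lambda>t. [N + t, N + t]) [0..<k])) q"
    by (rule conc.arch_end[OF u])
  finally show ?case using Suc by (simp add: mult.assoc)
qed

definition GG :: "share \<Rightarrow> lop" where "GG s = Pv ll rr (fst s) (rev (snd s))"

lemma GG_add_arches: "GG (add_arches k s) = lC ^ k * GG s"
proof -
  define N where "N = Suc (Max (insert 0 (set (fst s @ snd s))))"
  have "\<forall>x\<in>set (fst s) \<union> set (rev (snd s)). x < N"
  proof
    fix x assume "x \<in> set (fst s) \<union> set (rev (snd s))"
    then have "x \<le> Max (insert 0 (set (fst s @ snd s)))" by (intro Max_ge) auto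
    then show "x < N" by (simp add: N_def)
  qed
  then show ?thesis
    unfolding GG_def add_arches_def Let_def N_def[symmetric] by (simp add: Pv_arches)
qed

lemma wrep_GG: "i \<le> n \<Longrightarrow> j \<le> n \<Longrightarrow> wrep n (join s H) i j = Phi n (fst H) (snd H) i j (GG s)"
  using wrep_join[of i n j "fst s" "snd s" "fst H" "snd H"] by (simp add: GG_def)

lemma sum_list_upt: "sum_list (map f [0..<m]) = (\<Sum>k<m. f k)"
  by (induction m) simp_all

lemma comb_w_append: "comb_w n (L1 @ L2) H i j = comb_w n L1 H i j + comb_w n L2 H i j"
  by (simp add: comb_w_def)

lemma comb_w_concat: "comb_w n (concat Ls) H i j = sum_list (map (\<lambda>L. comb_w n L H i j) Ls)"
  by (induction Ls) (simp_all add: comb_w_append, simp add: comb_w_def)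

lemma comb_w_Cons: "comb_w n ((a, s) # L) H i j = a * wrep n (join s H) i j + comb_w n L H i j"
  by (simp add: comb_w_def)

lemma comb_w_poly_act: "comb_w n (poly_act p s) H i j = (\<Sum>k<Suc (degree p). coeff p k * wrep n (join (add_arches k s) H) i j)"
  unfolding poly_act_def comb_w_def by (simp add: sum_list_upt comp_def)

lemma ring_to_S:
  assumes eq: "GG I = GG (T m) + (\<Sum>k<m. conc.pe (b k) * GG (T k))"
  shows "S_eq [(1, I)] ((1, T m) # concat (map (\<lambda>k. poly_act (b k) (T k)) [0..<m]))"
  unfolding S_eq_def
proof (intro allI impI)
  fix H :: share and n i j :: nat assume ij: "i \<le> n" "j \<le> n"
  let ?P = "Phi n (fst H) (snd H) i j"
  have "comb_w n [(1, I)] H i j = ?P (GG I)"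
    using ij by (simp add: comb_w_def wrep_GG)
  also have "\<dots> = ?P (GG (T m)) + (\<Sum>k<m. \<Sum>k'\<le>degree (b k). coeff (b k) k' * cn n ^ k' * ?P (GG (T k)))"
    unfolding eq Phi_add Phi_sum by (simp add: Phi_pe[OF ij(1)])
  also have "\<dots> = comb_w n ((1, T m) # concat (map (\<lambda>k. poly_act (b k) (T k)) [0..<m])) H i j"
    unfolding comb_w_Cons comb_w_concat map_map comp_def sum_list_upt comb_w_poly_act
    using ij by (simp add: wrep_GG GG_add_arches Phi_Cpow lessThan_Suc_atMost mult.assoc)
  finally show "comb_w n [(1, I)] H i j = comb_w n ((1, T m) # concat (map (\<lambda>k. poly_act (b k) (T k)) [0..<m])) H i j" .
qed


lemma count_distinct: "distinct xs \<Longrightarrow> count_list xs x \<le> 1"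
  by (induction xs) (auto simp: count_in)

lemma count_distinct1: "distinct xs \<Longrightarrow> x \<in> set xs \<Longrightarrow> count_list xs x = 1"
  by (induction xs) (auto simp: count_in)

lemma exists_coeffs:
  assumes I: "wfd (fst I @ rev (snd I))" "\<forall>t. count_list (fst I) t \<le> 1" "\<forall>t. count_list (rev (snd I)) t \<le> 1"
      "length (fst I @ rev (snd I)) div 2 = m"
    and T: "\<And>k. wfd (fst (T k) @ rev (snd (T k)))" "\<And>k. \<forall>t. count_list (fst (T k)) t \<le> 1"
      "\<And>k. \<forall>t. count_list (rev (snd (T k))) t \<le> 1" "\<And>k. length (fst (T k) @ rev (snd (T k))) div 2 = k"
  shows "\<exists>b. GG I = GG (T m) + (\<Sum>k<m. conc.pe (b k) * GG (T k))"
proof -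
  let ?S = "Spn scl lC (\<lambda>j. Om ll rr ^ j)"
  have mI: "GG I - Om ll rr ^ m \<in> ?S m"
    using conc.monic[OF I(1-3)] I(4) by (simp add: GG_def)
  have mT: "GG (T k) - Om ll rr ^ k \<in> ?S k" for k
    using conc.monic[OF T(1) T(2) T(3), of k] T(4)[of k] by (simp add: GG_def)
  have "(GG I - Om ll rr ^ m) - (GG (T m) - Om ll rr ^ m) \<in> ?S m"
    by (rule conc.Spn_diff[OF mI mT])
  then have "GG I - GG (T m) \<in> ?S m" by simp
  then have "GG I - GG (T m) \<in> Spn scl lC (\<lambda>k. GG (T k)) m"
    by (rule conc.Spn_Om_sub[OF mT])
  then obtain b where "GG I - GG (T m) = (\<Sum>k<m. conc.pe (b k) * GG (T k))"
    using conc.Spn_extract by blast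
  then have "GG I = GG (T m) + (\<Sum>k<m. conc.pe (b k) * GG (T k))"
    by (simp add: diff_eq_eq add.commute)
  then show ?thesis by blast
qed

lemma share_props:
  assumes sh: "is_share I" and ar: "arches I = 0" and br: "bridges I = m"
  shows "wfd (fst I @ rev (snd I))" "\<forall>t. count_list (fst I) t \<le> 1" "\<forall>t. count_list (rev (snd I)) t \<le> 1"
      "length (fst I @ rev (snd I)) div 2 = m"
proof -
  define p where "p = fst I"
  define q where "q = snd I"
  have c2: "\<And>l. l \<in> set (p @ q) \<Longrightarrow> count_list (p @ q) l = 2"
    using sh by (simp add: is_share_def p_def q_def)
  have fin: "finite {l \<in> set p \<union> set q. count_list p l = 2 \<or> count_list q l = 2}" by simp
  then have emp: "{l \<in> set p \<union> set q. count_list p l = 2 \<or> count_list q l = 2} = {}"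
    using ar by (simp add: arches_def p_def q_def)
  have cp: "count_list p t \<le> 1" for t
  proof (cases "t \<in> set p")
    case True
    then have "count_list p t + count_list q t = 2" using c2[of t] by simp
    moreover have "count_list p t \<noteq> 2" using emp True by blast
    ultimately show ?thesis by linarith
  next
    case False then show ?thesis by simp
  qed
  have cq: "count_list q t \<le> 1" for t
  proof (cases "t \<in> set q")
    case True
    then have "count_list p t + count_list q t = 2" using c2[of t] by simp
    moreover have "count_list q t \<noteq> 2" using emp True by blast
    ultimately show ?thesis by linarith
  next
    case False then show ?thesis by simp
  qed
  show "wfd (fst I @ rev (snd I))"
    unfolding wfd_def using c2 by (simp add: p_def q_def)
  show "\<forall>t. count_list (fst I) t \<le> 1" using cp by (simp add: p_def)
  show "\<forall>t. count_list (rev (snd I)) t \<le> 1" using cq by (simp add: q_def)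
  have bset: "{l \<in> set p \<union> set q. count_list p l = 1 \<and> count_list q l = 1} = set (p @ q)"
  proof
    show "set (p @ q) \<subseteq> {l \<in> set p \<union> set q. count_list p l = 1 \<and> count_list q l = 1}"
    proof
      fix l assume l: "l \<in> set (p @ q)"
      have "count_list p l + count_list q l = 2" using c2[OF l] by simp
      then have "count_list p l = 1 \<and> count_list q l = 1" using cp[of l] cq[of l] by linarith
      then show "l \<in> {l \<in> set p \<union> set q. count_list p l = 1 \<and> count_list q l = 1}" using l by simp
    qed
  qed auto
  have "m = card (set (p @ q))" using br bset by (simp add: bridges_def p_def q_def)
  moreover have "length (p @ q) = (\<Sum>l\<in>set (p @ q). count_list (p @ q) l)"
    by (rule sum_count_set[symmetric]) auto
  moreover have "(\<Sum>l\<in>set (p @ q). count_list (p @ q) l) = 2 * card (set (p @ q))"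
    using c2 by simp
  ultimately show "length (fst I @ rev (snd I)) div 2 = m" by (simp add: p_def q_def)
qed

lemma count_upt: "count_list [0..<k] t \<le> 1" "count_list [0..<k] t \<le> Suc 0"
  using count_distinct[of "[0..<k]" t] by simp_all

lemma xpow_props:
  shows "wfd (fst (xpow k) @ rev (snd (xpow k)))" "\<forall>t. count_list (fst (xpow k)) t \<le> 1"
    "\<forall>t. count_list (rev (snd (xpow k))) t \<le> 1" "length (fst (xpow k) @ rev (snd (xpow k))) div 2 = k"
  by (auto simp: xpow_def wfd_def count_upt count_distinct1)

lemma ypow_props:
  shows "wfd (fst (ypow k) @ rev (snd (ypow k)))" "\<forall>t. count_list (fst (ypow k)) t \<le> 1"
    "\<forall>t. count_list (rev (snd (ypow k))) t \<le> 1" "length (fst (ypow k) @ rev (snd (ypow k))) div 2 = k"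
  by (auto simp: ypow_def wfd_def count_upt count_distinct1)

theorem lemma3:
  fixes I :: share and m :: nat
  assumes "is_share I" and "bridges I = m" and "arches I = 0"
  shows "(\<exists>a :: nat \<Rightarrow> complex poly.
            S_eq [(1, I)] ((1, xpow m) # concat (map (\<lambda>k. poly_act (a k) (xpow k)) [0..<m])))
       \<and> (\<exists>b :: nat \<Rightarrow> complex poly.
            S_eq [(1, I)] ((1, ypow m) # concat (map (\<lambda>k. poly_act (b k) (ypow k)) [0..<m])))"
proof -
  note sp = share_props[OF assms(1) assms(3) assms(2)]
  obtain a where a: "GG I = GG (xpow m) + (\<Sum>k<m. conc.pe (a k) * GG (xpow k))"
    using exists_coeffs[OF sp xpow_props] by blast
  obtain b where b: "GG I = GG (ypow m) + (\<Sum>k<m. conc.pe (b k) * GG (ypow k))"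
    using exists_coeffs[OF sp ypow_props] by blast
  show ?thesis using ring_to_S[OF a] ring_to_S[OF b] by blast
qed


end
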